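(* If $\dim({\cal H})<\infty$, then $\mathrm{Sig}(T)=0$ for every $J$-unitary $T$ on ${\cal K}$ (all of which are then essentially ${\mathbb S}^1$-gapped and ${\mathbb S}^1$-Fredholm).
   Context: ${\cal H}$ is a complex Hilbert space, ${\cal K}={\cal H}\oplus{\cal H}$, $J=\begin{pmatrix}{\bf 1}&0\\0&-{\bf 1}\end{pmatrix}$. A bounded invertible $T$ is $J$-unitary if $T^*JT=J$; it is essentially ${\mathbb S}^1$-gapped if it has only discrete spectrum (isolated eigenvalues of finite algebraic multiplicity) on the unit circle, and ${\mathbb S}^1$-Fredholm if $T-z{\bf 1}$ is Fredholm for all $|z|=1$. For essentially ${\mathbb S}^1$-gapped $T$, choose $h>0$ such that the closed annulus $\{e^{-h}\le|z|\le e^h\}$ contains only discrete spectrum of $T$ and none on its boundary; let ${\cal E}_=$ be the span of the generalized eigenspaces of the eigenvalues of $T$ in this annulus, $\Phi_=$ an isometry onto ${\cal E}_=$, and $\mathrm{Sig}(T)=\nu_+-\nu_-$ where $\nu_\pm$ are the numbers of positive/negative eigenvalues of $\Phi_=^*J\Phi_=$. *)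

theory Defs
  imports "Jordan_Normal_Form.Jordan_Normal_Form" "Jordan_Normal_Form.Spectral_Radius"
begin

text \<open>H = complex^n (finite dimension n), K = H (+) H = complex^(2n), operators on K are
  complex (2n)x(2n) matrices; the first n coordinates are the first summand.\<close>

definition J_mat :: "nat \<Rightarrow> complex mat" where
  "J_mat n = mat (2*n) (2*n) (\<lambda>(i,j). if i = j then (if i < n then 1 else -1) else 0)"

definition J_unitary :: "nat \<Rightarrow> complex mat \<Rightarrow> bool" where
  "J_unitary n T \<longleftrightarrow> T \<in> carrier_mat (2*n) (2*n) \<and> invertible_mat T \<and>
     mat_adjoint T * J_mat n * T = J_mat n"

definition op_spectrum :: "complex mat \<Rightarrow> complex set" where
  "op_spectrum T = {z. \<not> invertible_mat (T - z \<cdot>\<^sub>m 1\<^sub>m (dim_row T))}"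

definition gen_eigenspace :: "complex mat \<Rightarrow> complex \<Rightarrow> complex vec set" where
  "gen_eigenspace T z = {v \<in> carrier_vec (dim_row T).
      \<exists>k. ((T - z \<cdot>\<^sub>m 1\<^sub>m (dim_row T)) ^\<^sub>m k) *\<^sub>v v = 0\<^sub>v (dim_row T)}"

text \<open>Discrete spectrum: isolated point of the spectrum which is an eigenvalue of finite
  algebraic multiplicity (the generalized eigenspace is finite dimensional).\<close>
definition discrete_spectrum_point :: "complex mat \<Rightarrow> complex \<Rightarrow> bool" where
  "discrete_spectrum_point T z \<longleftrightarrow> z \<in> op_spectrum T \<and> eigenvalue T z \<and>
     (\<exists>e>0. \<forall>w \<in> op_spectrum T. cmod (w - z) < e \<longrightarrow> w = z) \<and>
     (\<exists>B. finite B \<and> B \<subseteq> gen_eigenspace T z \<and>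
        gen_eigenspace T z \<subseteq> module.span class_ring (module_vec TYPE(complex) (dim_row T)) B)"

definition ess_S1_gapped :: "complex mat \<Rightarrow> bool" where
  "ess_S1_gapped T \<longleftrightarrow> (\<forall>z \<in> op_spectrum T. cmod z = 1 \<longrightarrow> discrete_spectrum_point T z)"

definition admissible_width :: "complex mat \<Rightarrow> real \<Rightarrow> bool" where
  "admissible_width T h \<longleftrightarrow> h > 0 \<and>
     (\<forall>z \<in> op_spectrum T. exp (-h) \<le> cmod z \<and> cmod z \<le> exp h \<longrightarrow> discrete_spectrum_point T z) \<and>
     (\<forall>z \<in> op_spectrum T. cmod z \<noteq> exp (-h) \<and> cmod z \<noteq> exp h)"

definition E_eq :: "complex mat \<Rightarrow> real \<Rightarrow> complex vec set" where
  "E_eq T h = module.span class_ring (module_vec TYPE(complex) (dim_row T))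
     (\<Union> {gen_eigenspace T z | z. eigenvalue T z \<and> exp (-h) \<le> cmod z \<and> cmod z \<le> exp h})"

definition isometry_onto :: "complex mat \<Rightarrow> nat \<Rightarrow> nat \<Rightarrow> complex vec set \<Rightarrow> bool" where
  "isometry_onto Phi m k E \<longleftrightarrow> Phi \<in> carrier_mat m k \<and> mat_adjoint Phi * Phi = 1\<^sub>m k \<and>
     {Phi *\<^sub>v x | x. x \<in> carrier_vec k} = E"

definition nu_pos :: "complex mat \<Rightarrow> nat" where
  "nu_pos M = (\<Sum>a \<in> {a. poly (char_poly M) a = 0 \<and> a \<in> \<real> \<and> Re a > 0}. order a (char_poly M))"

definition nu_neg :: "complex mat \<Rightarrow> nat" where
  "nu_neg M = (\<Sum>a \<in> {a. poly (char_poly M) a = 0 \<and> a \<in> \<real> \<and> Re a < 0}. order a (char_poly M))"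

text \<open>Sig(T) computed with a given admissible h and isometry Phi.\<close>
definition Sig_with :: "nat \<Rightarrow> complex mat \<Rightarrow> int" where
  "Sig_with n Phi = int (nu_pos (mat_adjoint Phi * J_mat n * Phi)) - int (nu_neg (mat_adjoint Phi * J_mat n * Phi))"

end

theory Submission
  imports Defs
begin

definition ip :: "nat \<Rightarrow> complex vec \<Rightarrow> complex vec \<Rightarrow> complex" where
  "ip N x y = (\<Sum>i<N. x$i * cnj (y$i))"

lemma mult_vec_index:
  assumes "A \<in> carrier_mat N M" "x \<in> carrier_vec M" "i < N"
  shows "(A *\<^sub>v x)$i = (\<Sum>j<M. A$$(i,j) * x$j)"
  using assms by (auto simp: scalar_prod_def lessThan_atLeast0 intro!: sum.cong)

lemma adjoint_carrier: "A \<in> carrier_mat N M \<Longrightarrow> mat_adjoint A \<in> carrier_mat M N"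
  unfolding mat_adjoint_def by auto

lemma adjoint_index:
  assumes "A \<in> carrier_mat N M" "i < M" "j < N"
  shows "mat_adjoint A $$ (i,j) = cnj (A$$(j,i))"
  using assms unfolding mat_adjoint_def by (auto simp: mat_of_rows_def)

lemma ip_adj:
  assumes A: "A \<in> carrier_mat N M" and x: "x \<in> carrier_vec M" and y: "y \<in> carrier_vec N"
  shows "ip N (A *\<^sub>v x) y = ip M x (mat_adjoint A *\<^sub>v y)"
proof -
  have "ip N (A *\<^sub>v x) y = (\<Sum>i<N. \<Sum>j<M. A$$(i,j) * x$j * cnj (y$i))"
    unfolding ip_def using A x by (simp add: mult_vec_index sum_distrib_right del: index_mult_mat_vec)
  also have "\<dots> = (\<Sum>j<M. \<Sum>i<N. A$$(i,j) * x$j * cnj (y$i))" by (rule sum.swap)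
  also have "\<dots> = ip M x (mat_adjoint A *\<^sub>v y)"
    unfolding ip_def using A y
    by (auto simp: mult_vec_index[OF adjoint_carrier[OF A]] adjoint_index sum_distrib_left
        mult.commute mult.left_commute simp del: index_mult_mat_vec intro!: sum.cong)
  finally show ?thesis .
qed
definition sh :: "complex mat \<Rightarrow> complex \<Rightarrow> complex vec \<Rightarrow> complex vec" where
  "sh A c v = A *\<^sub>v v - c \<cdot>\<^sub>v v"

lemma sh_carrier: "A \<in> carrier_mat N N \<Longrightarrow> v \<in> carrier_vec N \<Longrightarrow> sh A c v \<in> carrier_vec N"
  unfolding sh_def by auto

lemma shpow_carrier: "A \<in> carrier_mat N N \<Longrightarrow> v \<in> carrier_vec N \<Longrightarrow> (sh A c ^^ k) v \<in> carrier_vec N"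
  by (induct k) (auto simp: sh_carrier)

lemma sh_add: "A \<in> carrier_mat N N \<Longrightarrow> v \<in> carrier_vec N \<Longrightarrow> w \<in> carrier_vec N \<Longrightarrow>
  sh A c (v + w) = sh A c v + sh A c w"
  unfolding sh_def by (intro eq_vecI) (auto simp: mult_add_distrib_mat_vec algebra_simps)

lemma sh_smult: "A \<in> carrier_mat N N \<Longrightarrow> v \<in> carrier_vec N \<Longrightarrow>
  sh A c (a \<cdot>\<^sub>v v) = a \<cdot>\<^sub>v sh A c v"
  unfolding sh_def by (intro eq_vecI) (auto simp: mult_mat_vec algebra_simps)

lemma sh_zero: "A \<in> carrier_mat N N \<Longrightarrow> sh A c (0\<^sub>v N) = 0\<^sub>v N"
  unfolding sh_def by (intro eq_vecI) auto

lemma shpow_add: "A \<in> carrier_mat N N \<Longrightarrow> v \<in> carrier_vec N \<Longrightarrow> w \<in> carrier_vec N \<Longrightarrow>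
  (sh A c ^^ k) (v + w) = (sh A c ^^ k) v + (sh A c ^^ k) w"
  by (induct k) (auto simp: sh_add shpow_carrier)

lemma shpow_smult: "A \<in> carrier_mat N N \<Longrightarrow> v \<in> carrier_vec N \<Longrightarrow>
  (sh A c ^^ k) (a \<cdot>\<^sub>v v) = a \<cdot>\<^sub>v (sh A c ^^ k) v"
  by (induct k) (auto simp: sh_smult shpow_carrier)

lemma shpow_zero: "A \<in> carrier_mat N N \<Longrightarrow> (sh A c ^^ k) (0\<^sub>v N) = 0\<^sub>v N"
  by (induct k) (auto simp: sh_zero)

lemma sh_comm: "A \<in> carrier_mat N N \<Longrightarrow> v \<in> carrier_vec N \<Longrightarrow> sh A c (sh A d v) = sh A d (sh A c v)"
  unfolding sh_def by (intro eq_vecI)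
    (auto simp: mult_minus_distrib_mat_vec mult_mat_vec algebra_simps)

lemma shpow_comm: "A \<in> carrier_mat N N \<Longrightarrow> v \<in> carrier_vec N \<Longrightarrow>
  (sh A c ^^ k) (sh A d v) = sh A d ((sh A c ^^ k) v)"
  by (induct k) (auto simp: sh_comm shpow_carrier)

lemma shpow_plus: "(sh A c ^^ (k + l)) v = (sh A c ^^ k) ((sh A c ^^ l) v)"
  by (simp add: funpow_add)

lemma pow_mat_sh:
  assumes A: "A \<in> carrier_mat N N" and v: "v \<in> carrier_vec N"
  shows "((A - c \<cdot>\<^sub>m 1\<^sub>m N) ^\<^sub>m k) *\<^sub>v v = (sh A c ^^ k) v"
  using v
proof (induct k arbitrary: v)
  case 0 then show ?case using A by simp
next
  case (Suc k)
  have B: "A - c \<cdot>\<^sub>m 1\<^sub>m N \<in> carrier_mat N N" using A by auto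
  have "((A - c \<cdot>\<^sub>m 1\<^sub>m N) ^\<^sub>m Suc k) *\<^sub>v v = ((A - c \<cdot>\<^sub>m 1\<^sub>m N) ^\<^sub>m k) *\<^sub>v ((A - c \<cdot>\<^sub>m 1\<^sub>m N) *\<^sub>v v)"
    using B Suc by (simp del: assoc_mult_mat_vec add: assoc_mult_mat_vec[of _ N N _ N])
  also have "(A - c \<cdot>\<^sub>m 1\<^sub>m N) *\<^sub>v v = sh A c v"
    unfolding sh_def using A Suc by (intro eq_vecI) (auto simp: minus_mult_distrib_mat_vec)
  finally show ?case using Suc A by (simp add: sh_carrier funpow_Suc_right del: funpow.simps)
qed

lemma gen_eig_iff:
  assumes A: "A \<in> carrier_mat N N"
  shows "v \<in> gen_eigenspace A c \<longleftrightarrow> v \<in> carrier_vec N \<and> (\<exists>k. (sh A c ^^ k) v = 0\<^sub>v N)"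
  using A unfolding gen_eigenspace_def by (auto simp: pow_mat_sh)

lemma shpow_mono: assumes A: "A \<in> carrier_mat N N" and "(sh A c ^^ k) v = 0\<^sub>v N" "k \<le> l"
  shows "(sh A c ^^ l) v = 0\<^sub>v N"
proof -
  have "l = (l - k) + k" using assms by simp
  then show ?thesis using assms shpow_zero[OF A] by (metis shpow_plus)
qed

lemma gen_eig_zero: "A \<in> carrier_mat N N \<Longrightarrow> 0\<^sub>v N \<in> gen_eigenspace A c"
  by (auto simp: gen_eig_iff intro: exI[of _ 0])

lemma gen_eig_add: assumes A: "A \<in> carrier_mat N N" 
  and "v \<in> gen_eigenspace A c" "w \<in> gen_eigenspace A c"
  shows "v + w \<in> gen_eigenspace A c"
proof -
  from assms obtain k l where v: "v \<in> carrier_vec N" "(sh A c ^^ k) v = 0\<^sub>v N"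
    and w: "w \<in> carrier_vec N" "(sh A c ^^ l) w = 0\<^sub>v N" by (auto simp: gen_eig_iff)
  have "(sh A c ^^ (max k l)) v = 0\<^sub>v N" "(sh A c ^^ (max k l)) w = 0\<^sub>v N"
    using shpow_mono[OF A] v w by auto
  then show ?thesis using v w A by (auto simp: gen_eig_iff shpow_add intro!: exI[of _ "max k l"])
qed

lemma gen_eig_smult: assumes A: "A \<in> carrier_mat N N" 
  and "v \<in> gen_eigenspace A c"
  shows "a \<cdot>\<^sub>v v \<in> gen_eigenspace A c"
proof -
  from assms obtain k where "v \<in> carrier_vec N" "(sh A c ^^ k) v = 0\<^sub>v N" by (auto simp: gen_eig_iff)
  then show ?thesis using assms by (auto simp: gen_eig_iff shpow_smult intro!: exI[of _ k])
qed

lemma gen_eig_sh: assumes A: "A \<in> carrier_mat N N" 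
  and "v \<in> gen_eigenspace A c"
  shows "sh A d v \<in> gen_eigenspace A c"
proof -
  from assms obtain k where "v \<in> carrier_vec N" "(sh A c ^^ k) v = 0\<^sub>v N" by (auto simp: gen_eig_iff)
  then show ?thesis using assms by (auto simp: gen_eig_iff shpow_comm sh_carrier sh_zero intro!: exI[of _ k])
qed
lemma sh_shift: "A \<in> carrier_mat N N \<Longrightarrow> v \<in> carrier_vec N \<Longrightarrow> sh A c v = sh A m v + (m - c) \<cdot>\<^sub>v v"
  unfolding sh_def by (intro eq_vecI) (auto simp: algebra_simps)

lemma sh_minus: "A \<in> carrier_mat N N \<Longrightarrow> v \<in> carrier_vec N \<Longrightarrow> w \<in> carrier_vec N \<Longrightarrow>
  sh A c (v - w) = sh A c v - sh A c w"
  unfolding sh_def by (intro eq_vecI) (auto simp: mult_minus_distrib_mat_vec algebra_simps)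

primrec nseq :: "complex mat \<Rightarrow> complex \<Rightarrow> complex \<Rightarrow> complex vec \<Rightarrow> nat \<Rightarrow> complex vec" where
  "nseq A m d g 0 = 0\<^sub>v (dim_vec g)"
| "nseq A m d g (Suc k) = (1/d) \<cdot>\<^sub>v (g - sh A m (nseq A m d g k))"

lemma nseq_props:
  assumes A: "A \<in> carrier_mat N N" and g: "g \<in> carrier_vec N"
  and P0: "P (0\<^sub>v N)" and Padd: "\<And>x y. P x \<Longrightarrow> P y \<Longrightarrow> P (x + y)" 
  and Psm: "\<And>x a. P x \<Longrightarrow> P (a \<cdot>\<^sub>v x)" and Psh: "\<And>x. P x \<Longrightarrow> P (sh A m x)"
  and Pc: "\<And>x. P x \<Longrightarrow> x \<in> carrier_vec N" and Pg: "P g"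
  shows "P (nseq A m d g k)"
proof (induct k)
  case 0 then show ?case using g P0 by simp
next
  case (Suc k)
  have "g - sh A m (nseq A m d g k) = g + (-1) \<cdot>\<^sub>v sh A m (nseq A m d g k)"
    using Suc Pc Psh g by (intro eq_vecI) auto
  then show ?case using Suc by (simp add: Padd Psm Psh Pg)
qed

lemma nseq_eq:
  assumes A: "A \<in> carrier_mat N N" and g: "g \<in> carrier_vec N" and d: "d = m - c" "d \<noteq> 0"
  shows "sh A c (nseq A m d g k) = g - ((-1/d)^k) \<cdot>\<^sub>v (sh A m ^^ k) g"
proof (induct k)
  case 0 then show ?case using g A by (intro eq_vecI) (auto simp: sh_def)
next
  case (Suc k)
  let ?s = "nseq A m d g k"
  let ?e = "((-1/d)^k) \<cdot>\<^sub>v (sh A m ^^ k) g"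
  have sC: "?s \<in> carrier_vec N"
    using nseq_props[OF A g, of "\<lambda>x. x \<in> carrier_vec N"] A g by (auto simp: sh_carrier)
  have eC: "?e \<in> carrier_vec N" "(sh A m ^^ k) g \<in> carrier_vec N" using A g by (auto simp: shpow_carrier)
  have IH: "sh A m ?s + d \<cdot>\<^sub>v ?s = g - ?e" using Suc sh_shift[OF A sC, of c m] d by simp
  have Ns: "sh A m ?s = g - ?e - d \<cdot>\<^sub>v ?s"
    using IH sC eC g sh_carrier[OF A sC, of m] by (intro eq_vecI) (auto simp: vec_eq_iff eq_diff_eq)
  have "sh A m (sh A m ?s) = sh A m (g - ?e - d \<cdot>\<^sub>v ?s)" by (simp only: Ns)
  also have "\<dots> = sh A m g - sh A m ?e - d \<cdot>\<^sub>v sh A m ?s"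
    using A sC eC g by (simp add: sh_minus sh_smult sh_carrier)
  finally have NNs: "sh A m (sh A m ?s) = sh A m g - sh A m ?e - d \<cdot>\<^sub>v sh A m ?s" .
  have NE: "sh A m ?e = ((-1/d)^k) \<cdot>\<^sub>v (sh A m ^^ Suc k) g"
    using A eC by (simp add: sh_smult)
  have C1: "sh A m ?s \<in> carrier_vec N" "sh A m g \<in> carrier_vec N" "sh A m ?e \<in> carrier_vec N"
     "(sh A m ^^ Suc k) g \<in> carrier_vec N"
    using A sC g eC by (auto simp: sh_carrier shpow_carrier simp del: funpow.simps)
  have "sh A c (nseq A m d g (Suc k)) = sh A m ((1/d) \<cdot>\<^sub>v (g - sh A m ?s)) + d \<cdot>\<^sub>v ((1/d) \<cdot>\<^sub>v (g - sh A m ?s))"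
    using sh_shift[OF A, of "(1/d) \<cdot>\<^sub>v (g - sh A m ?s)" c m] d C1 g by simp
  also have "\<dots> = (1/d) \<cdot>\<^sub>v (sh A m g - sh A m (sh A m ?s)) + (g - sh A m ?s)"
    using A g C1 d sC by (simp add: sh_smult sh_minus sh_carrier, intro eq_vecI, auto)
  also have "\<dots> = (1/d) \<cdot>\<^sub>v sh A m ?e + g"
    unfolding NNs using C1 g sC d by (intro eq_vecI) (auto simp: field_simps)
  also have "\<dots> = g - ((-1/d)^Suc k) \<cdot>\<^sub>v (sh A m ^^ Suc k) g"
    unfolding NE using C1 g d by (intro eq_vecI) (auto simp: field_simps simp del: funpow.simps)
  finally show ?case .
qed

lemma gen_eig_invert:
  assumes A: "A \<in> carrier_mat N N" and g: "g \<in> gen_eigenspace A m" and mc: "m \<noteq> c"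
  and P0: "P (0\<^sub>v N)" and Padd: "\<And>x y. P x \<Longrightarrow> P y \<Longrightarrow> P (x + y)" 
  and Psm: "\<And>x a. P x \<Longrightarrow> P (a \<cdot>\<^sub>v x)" and Psh: "\<And>x. P x \<Longrightarrow> P (sh A m x)"
  and Pc: "\<And>x. P x \<Longrightarrow> x \<in> carrier_vec N" and Pg: "P g"
  shows "\<exists>s. s \<in> gen_eigenspace A m \<and> P s \<and> sh A c s = g"
proof -
  from g obtain k where gC: "g \<in> carrier_vec N" and k: "(sh A m ^^ k) g = 0\<^sub>v N"
    using A by (auto simp: gen_eig_iff)
  define d where "d = m - c"
  have d0: "d \<noteq> 0" using mc d_def by auto
  let ?s = "nseq A m d g k"
  have "?s \<in> gen_eigenspace A m"
    by (rule nseq_props[OF A gC, of "\<lambda>x. x \<in> gen_eigenspace A m"])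
     (use A g in \<open>auto simp: gen_eig_zero gen_eig_add gen_eig_smult gen_eig_sh\<close>,
      auto simp: gen_eig_iff[OF A])
  moreover have "P ?s" using nseq_props[OF A gC, of P] assms by blast
  moreover have "sh A c ?s = g" using nseq_eq[OF A gC d_def d0, of k] k gC
    by (intro eq_vecI) auto
  ultimately show ?thesis by blast
qed
definition lowsupp :: "nat \<Rightarrow> nat \<Rightarrow> complex vec \<Rightarrow> bool" where
  "lowsupp N m x \<longleftrightarrow> x \<in> carrier_vec N \<and> (\<forall>i. m \<le> i \<longrightarrow> i < N \<longrightarrow> x$i = 0)"

lemma lowsupp_sh:
  assumes R: "R \<in> carrier_mat N N" "upper_triangular R" and x: "lowsupp N m x"
  shows "lowsupp N m (sh R c x)"
proof -
  have xc: "x \<in> carrier_vec N" using x lowsupp_def by auto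
  { fix i assume i: "m \<le> i" "i < N"
    have "(R *\<^sub>v x)$i = (\<Sum>j<N. R$$(i,j) * x$j)" using mult_vec_index[OF R(1) xc i(2)] .
    also have "\<dots> = 0"
    proof (intro sum.neutral ballI)
      fix j assume "j \<in> {..<N}"
      show "R$$(i,j) * x$j = 0"
      proof (cases "j < i")
        case True then show ?thesis using R i by (auto simp: upper_triangular_def)
      next
        case False then show ?thesis using x i \<open>j \<in> {..<N}\<close> by (auto simp: lowsupp_def)
      qed
    qed
    finally have "(R *\<^sub>v x)$i = 0" .
  }
  then show ?thesis using x R unfolding lowsupp_def sh_def by auto
qed

lemma lowsupp_zero: "lowsupp N m (0\<^sub>v N)" by (auto simp: lowsupp_def)
lemma lowsupp_add: "lowsupp N m x \<Longrightarrow> lowsupp N m y \<Longrightarrow> lowsupp N m (x + y)" by (auto simp: lowsupp_def)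
lemma lowsupp_smult: "lowsupp N m x \<Longrightarrow> lowsupp N m (a \<cdot>\<^sub>v x)" by (auto simp: lowsupp_def)
lemma lowsupp_mono: "lowsupp N m x \<Longrightarrow> m \<le> m' \<Longrightarrow> lowsupp N m' x" by (auto simp: lowsupp_def)

lemma lowsupp_unit:
  assumes R: "R \<in> carrier_mat N N" "upper_triangular R" and j: "j < N"
  shows "lowsupp N j (sh R (R$$(j,j)) (unit_vec N j))"
proof -
  { fix i assume i: "j \<le> i" "i < N"
    have "(R *\<^sub>v unit_vec N j)$i = R$$(i,j)" using R i j by simp
    then have "(sh R (R$$(j,j)) (unit_vec N j))$i = 0"
      using R i j by (cases "i = j") (auto simp: sh_def upper_triangular_def)
  }
  then show ?thesis using R unfolding lowsupp_def by (auto simp: sh_carrier)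
qed

lemma gen_eig_sh_rev:
  assumes A: "A \<in> carrier_mat N N" and x: "x \<in> carrier_vec N" and "sh A c x \<in> gen_eigenspace A c"
  shows "x \<in> gen_eigenspace A c"
proof -
  from assms obtain k where "(sh A c ^^ k) (sh A c x) = 0\<^sub>v N" by (auto simp: gen_eig_iff)
  then have "(sh A c ^^ Suc k) x = 0\<^sub>v N" by (simp add: funpow_Suc_right del: funpow.simps)
  then show ?thesis using x A by (auto simp: gen_eig_iff intro!: exI[of _ "Suc k"] simp del: funpow.simps)
qed

lemma tri_decomp:
  assumes R: "R \<in> carrier_mat N N" "upper_triangular R"
  and u: "\<And>i. i < j \<Longrightarrow> lowsupp N (Suc i) (u i) \<and> (u i)$i \<noteq> 0 \<and> u i \<in> gen_eigenspace R (R$$(i,i))"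
  and j: "j \<le> N"
  shows "m \<le> j \<Longrightarrow> lowsupp N m y \<Longrightarrow> \<exists>z g. lowsupp N j z \<and> g \<in> gen_eigenspace R c \<and> y = sh R c z + g"
proof (induct m arbitrary: y)
  case 0
  then have "y = 0\<^sub>v N" by (intro eq_vecI) (auto simp: lowsupp_def)
  then show ?case using R by (intro exI[of _ "0\<^sub>v N"]) (auto simp: lowsupp_zero gen_eig_zero sh_zero)
next
  case (Suc m)
  have mj: "m < j" using Suc by auto
  have um: "lowsupp N (Suc m) (u m)" "(u m)$m \<noteq> 0" "u m \<in> gen_eigenspace R (R$$(m,m))" using u mj by auto
  have mN: "m < N" using mj j by auto
  define a where "a = y$m / (u m)$m"
  define y' where "y' = y - a \<cdot>\<^sub>v u m"
  have yc: "y \<in> carrier_vec N" "u m \<in> carrier_vec N" using Suc um by (auto simp: lowsupp_def)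
  have "lowsupp N m y'"
    unfolding lowsupp_def y'_def
  proof (intro conjI allI impI)
    fix i assume i: "m \<le> i" "i < N"
    show "(y - a \<cdot>\<^sub>v u m) $ i = 0"
    proof (cases "i = m")
      case True then show ?thesis using yc i um by (auto simp: a_def)
    next
      case False then have "Suc m \<le> i" using i by auto
      then show ?thesis using yc i um Suc.prems by (auto simp: lowsupp_def)
    qed
  qed (use yc in auto)
  from Suc.hyps[OF _ this] Suc.prems obtain z' g' where
    z': "lowsupp N j z'" "g' \<in> gen_eigenspace R c" "y' = sh R c z' + g'" by auto
  have z'c: "z' \<in> carrier_vec N" "g' \<in> carrier_vec N" using z' R by (auto simp: lowsupp_def gen_eig_iff)
  have yy: "y = y' + a \<cdot>\<^sub>v u m" unfolding y'_def using yc by (intro eq_vecI) auto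
  show ?case
  proof (cases "R$$(m,m) = c")
    case True
    have "g' + a \<cdot>\<^sub>v u m \<in> gen_eigenspace R c"
      using gen_eig_add[OF R(1) z'(2) gen_eig_smult[OF R(1), of "u m" c a]] um True by auto
    moreover have "y = sh R c z' + (g' + a \<cdot>\<^sub>v u m)" unfolding yy z'(3)
      using z'c yc R sh_carrier[OF R(1) z'c(1), of c] by (intro eq_vecI) auto
    ultimately show ?thesis using z' by blast
  next
    case False
    have P: "lowsupp N (Suc m) (a \<cdot>\<^sub>v u m)" "a \<cdot>\<^sub>v u m \<in> gen_eigenspace R (R$$(m,m))"
      using um R by (auto simp: lowsupp_smult gen_eig_smult)
    obtain s where s: "s \<in> gen_eigenspace R (R$$(m,m))" "lowsupp N (Suc m) s" "sh R c s = a \<cdot>\<^sub>v u m"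
      using gen_eig_invert[OF R(1) P(2) False, of "lowsupp N (Suc m)", OF lowsupp_zero lowsupp_add
        lowsupp_smult lowsupp_sh[OF R] _ P(1)]
      by (auto simp: lowsupp_def)
    have sc: "s \<in> carrier_vec N" using s by (auto simp: lowsupp_def)
    have "lowsupp N j (z' + s)" using z' s mj lowsupp_add lowsupp_mono by (metis Suc_leI)
    moreover have "y = sh R c (z' + s) + g'" unfolding yy z'(3) sh_add[OF R(1) z'c(1) sc] s(3)
      using z'c yc R sc sh_carrier[OF R(1) z'c(1), of c] by (intro eq_vecI) auto
    ultimately show ?thesis using z' by blast
  qed
qed
lemma tri_basis_fun:
  assumes R: "R \<in> carrier_mat N N" "upper_triangular R"
  shows "j \<le> N \<Longrightarrow> \<exists>u. \<forall>i<j. lowsupp N (Suc i) (u i) \<and> (u i)$i = 1 \<and> u i \<in> gen_eigenspace R (R$$(i,i))"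
proof (induct j)
  case 0 then show ?case by auto
next
  case (Suc j)
  then obtain u where u: "\<forall>i<j. lowsupp N (Suc i) (u i) \<and> (u i)$i = 1 \<and> u i \<in> gen_eigenspace R (R$$(i,i))"
    by auto
  have jN: "j < N" using Suc by auto
  let ?c = "R$$(j,j)"
  have ls: "lowsupp N j (sh R ?c (unit_vec N j))" using lowsupp_unit[OF R jN] .
  have "\<exists>z g. lowsupp N j z \<and> g \<in> gen_eigenspace R ?c \<and> sh R ?c (unit_vec N j) = sh R ?c z + g"
    by (rule tri_decomp[OF R, where u=u and j=j and c="?c" and m=j]) (use u jN ls in auto)
  then obtain z g where zg: "lowsupp N j z" "g \<in> gen_eigenspace R ?c" "sh R ?c (unit_vec N j) = sh R ?c z + g"
    by fastforce
  have zc: "z \<in> carrier_vec N" "g \<in> carrier_vec N" using zg R by (auto simp: lowsupp_def gen_eig_iff)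
  define w where "w = unit_vec N j - z"
  have wc: "w \<in> carrier_vec N" using zc w_def by auto
  have "sh R ?c w = g" unfolding w_def using sh_minus[OF R(1), of "unit_vec N j" z ?c] zg(3) zc
    sh_carrier[OF R(1) zc(1), of ?c] by (auto intro!: eq_vecI)
  then have wg: "w \<in> gen_eigenspace R ?c" using gen_eig_sh_rev[OF R(1) wc] zg(2) by simp
  have wl: "lowsupp N (Suc j) w" "w$j = 1" using zg(1) jN unfolding w_def lowsupp_def by auto
  show ?case using u wg wl by (intro exI[of _ "u(j := w)"]) (auto simp: less_Suc_eq)
qed

lemma tri_basis:
  assumes R: "R \<in> carrier_mat N N" "upper_triangular R"
  shows "\<exists>U \<in> carrier_mat N N. (\<forall>x \<in> carrier_vec N. U *\<^sub>v x = 0\<^sub>v N \<longrightarrow> x = 0\<^sub>v N) \<and>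
     (\<forall>j<N. col U j \<in> gen_eigenspace R (R$$(j,j)))"
proof -
  obtain u where u: "\<forall>i<N. lowsupp N (Suc i) (u i) \<and> (u i)$i = 1 \<and> u i \<in> gen_eigenspace R (R$$(i,i))"
    using tri_basis_fun[OF R] by blast
  define U where "U = mat N N (\<lambda>(i,j). u j $ i)"
  have UC: "U \<in> carrier_mat N N" unfolding U_def by auto
  have cols: "\<And>j. j < N \<Longrightarrow> col U j = u j"
    using u unfolding U_def lowsupp_def by (auto intro!: eq_vecI)
  have ut: "upper_triangular U" unfolding upper_triangular_def U_def using u
    by (auto simp: lowsupp_def)
  have "det U = prod_list (diag_mat U)" using det_upper_triangular[OF ut UC] .
  also have "\<dots> = 1" unfolding diag_mat_def U_def using u
    by (auto intro!: prod_list_neutral)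
  finally have "det U \<noteq> 0" by simp
  then have ker: "\<forall>x \<in> carrier_vec N. U *\<^sub>v x = 0\<^sub>v N \<longrightarrow> x = 0\<^sub>v N"
    using det_0_iff_vec_prod_zero[OF UC] by blast
  show ?thesis using UC ker cols u by auto
qed
lemma sh_similar:
  assumes A: "A = P * B * Q" and C: "P \<in> carrier_mat N N" "B \<in> carrier_mat N N" "Q \<in> carrier_mat N N"
  and QP: "Q * P = 1\<^sub>m N" and x: "x \<in> carrier_vec N"
  shows "sh A c (P *\<^sub>v x) = P *\<^sub>v sh B c x"
proof -
  have "A *\<^sub>v (P *\<^sub>v x) = P *\<^sub>v (B *\<^sub>v ((Q * P) *\<^sub>v x))" unfolding A using C x
    by (simp add: assoc_mult_mat_vec[of _ N N _ N])
  also have "\<dots> = P *\<^sub>v (B *\<^sub>v x)" using QP x by simp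
  finally have "A *\<^sub>v (P *\<^sub>v x) = P *\<^sub>v (B *\<^sub>v x)" .
  then show ?thesis unfolding sh_def using C x
    by (simp add: mult_minus_distrib_mat_vec mult_mat_vec)
qed

lemma shpow_similar:
  assumes A: "A = P * B * Q" and C: "P \<in> carrier_mat N N" "B \<in> carrier_mat N N" "Q \<in> carrier_mat N N"
  and QP: "Q * P = 1\<^sub>m N" and x: "x \<in> carrier_vec N"
  shows "(sh A c ^^ k) (P *\<^sub>v x) = P *\<^sub>v (sh B c ^^ k) x"
proof (induct k)
  case 0 then show ?case by simp
next
  case (Suc k)
  then show ?case using sh_similar[OF A C QP shpow_carrier[OF C(2) x, of k c], of c] by simp
qed

lemma gen_basis:
  assumes A: "A \<in> carrier_mat N N" and cp: "char_poly A = (\<Prod>e\<leftarrow>es. [:-e, 1:])"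
  shows "\<exists>V \<in> carrier_mat N N. (\<forall>x \<in> carrier_vec N. V *\<^sub>v x = 0\<^sub>v N \<longrightarrow> x = 0\<^sub>v N) \<and>
     (\<forall>j<N. col V j \<in> gen_eigenspace A (es!j))"
proof -
  obtain B P Q where s: "schur_decomposition A es = (B,P,Q)" by (cases "schur_decomposition A es") auto
  from schur_decomposition[OF A cp s] have sw: "similar_mat_wit A B P Q" and ut: "upper_triangular B"
    and dg: "diag_mat B = es" by auto
  from sw A have C: "B \<in> carrier_mat N N" "P \<in> carrier_mat N N" "Q \<in> carrier_mat N N"
    and PQ: "P * Q = 1\<^sub>m N" "Q * P = 1\<^sub>m N" and AE: "A = P * B * Q"
    unfolding similar_mat_wit_def Let_def by auto
  obtain U where U: "U \<in> carrier_mat N N" "\<forall>x \<in> carrier_vec N. U *\<^sub>v x = 0\<^sub>v N \<longrightarrow> x = 0\<^sub>v N"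
    "\<forall>j<N. col U j \<in> gen_eigenspace B (B$$(j,j))" using tri_basis[OF C(1) ut] by blast
  define V where "V = P * U"
  have VC: "V \<in> carrier_mat N N" using C U unfolding V_def by auto
  have ker: "\<forall>x \<in> carrier_vec N. V *\<^sub>v x = 0\<^sub>v N \<longrightarrow> x = 0\<^sub>v N"
  proof (intro ballI impI)
    fix x assume x: "x \<in> carrier_vec N" and "V *\<^sub>v x = 0\<^sub>v N"
    then have "Q *\<^sub>v (V *\<^sub>v x) = 0\<^sub>v N" using C by auto
    moreover have "Q *\<^sub>v (V *\<^sub>v x) = (Q * P) *\<^sub>v (U *\<^sub>v x)" unfolding V_def using C U x by auto
    ultimately have "U *\<^sub>v x = 0\<^sub>v N" using PQ U x by auto
    then show "x = 0\<^sub>v N" using U x by auto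
  qed
  have "\<forall>j<N. col V j \<in> gen_eigenspace A (es!j)"
  proof (intro allI impI)
    fix j assume j: "j < N"
    have cV: "col V j = P *\<^sub>v col U j" unfolding V_def using col_mult2[OF C(2) U(1) j] .
    have e: "es!j = B$$(j,j)" using dg[symmetric] j C unfolding diag_mat_def by auto
    from U(3) j obtain k where uc: "col U j \<in> carrier_vec N" and k: "(sh B (B$$(j,j)) ^^ k) (col U j) = 0\<^sub>v N"
      using C by (auto simp: gen_eig_iff)
    have P0: "P *\<^sub>v 0\<^sub>v N = 0\<^sub>v N" using C by (intro eq_vecI) (auto simp: scalar_prod_def)
    have "(sh A (es!j) ^^ k) (col V j) = 0\<^sub>v N" unfolding cV e
      using shpow_similar[OF AE C(2,1,3) PQ(2) uc] k C P0 by simp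
    then show "col V j \<in> gen_eigenspace A (es!j)" using A VC j by (auto simp: gen_eig_iff)
  qed
  then show ?thesis using VC ker by blast
qed
lemma ip_conj: "ip N x y = cnj (ip N y x)"
  unfolding ip_def by (simp add: mult.commute)

lemma ip_adj2:
  assumes A: "A \<in> carrier_mat N M" and x: "x \<in> carrier_vec N" and y: "y \<in> carrier_vec M"
  shows "ip N x (A *\<^sub>v y) = ip M (mat_adjoint A *\<^sub>v x) y"
  using ip_adj[OF A y x] by (metis ip_conj)

lemma ip_add1: "x \<in> carrier_vec N \<Longrightarrow> y \<in> carrier_vec N \<Longrightarrow> ip N (x + y) z = ip N x z + ip N y z"
  unfolding ip_def by (simp add: sum.distrib algebra_simps)
lemma ip_add2: "y \<in> carrier_vec N \<Longrightarrow> z \<in> carrier_vec N \<Longrightarrow> ip N x (y + z) = ip N x y + ip N x z"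
  unfolding ip_def by (simp add: sum.distrib algebra_simps)
lemma ip_smult1: "x \<in> carrier_vec N \<Longrightarrow> ip N (a \<cdot>\<^sub>v x) z = a * ip N x z"
  unfolding ip_def by (simp add: sum_distrib_left algebra_simps)
lemma ip_smult2: "y \<in> carrier_vec N \<Longrightarrow> ip N x (a \<cdot>\<^sub>v y) = cnj a * ip N x y"
  unfolding ip_def by (simp add: sum_distrib_left algebra_simps)
lemma ip_zero1: "ip N (0\<^sub>v N) z = 0" unfolding ip_def by simp
lemma ip_zero2: "ip N x (0\<^sub>v N) = 0" unfolding ip_def by simp

lemma ip_self_zero: assumes "w \<in> carrier_vec N" "ip N w w = 0" shows "w = 0\<^sub>v N"
proof -
  have "ip N w w = of_real (\<Sum>i<N. (Re (w$i))^2 + (Im (w$i))^2)"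
    unfolding ip_def by (simp add: complex_mult_cnj)
  then have "(\<Sum>i<N. (Re (w$i))^2 + (Im (w$i))^2) = 0" using assms by (metis of_real_eq_0_iff)
  then have "\<forall>i\<in>{..<N}. (Re (w$i))^2 + (Im (w$i))^2 = 0" by (subst sum_nonneg_eq_0_iff[symmetric]) auto
  then have "\<forall>i<N. Re (w$i) = 0 \<and> Im (w$i) = 0" by (auto simp: add_nonneg_eq_0_iff)
  then show ?thesis using assms by (intro eq_vecI) (auto simp: complex_eq_iff)
qed

definition jform :: "nat \<Rightarrow> complex vec \<Rightarrow> complex vec \<Rightarrow> complex" where
  "jform n x y = ip (2*n) (J_mat n *\<^sub>v x) y"

lemma J_carrier: "J_mat n \<in> carrier_mat (2*n) (2*n)" unfolding J_mat_def by auto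

lemma J_index: assumes "w \<in> carrier_vec (2*n)" "i < 2*n"
  shows "(J_mat n *\<^sub>v w)$i = (if i < n then w$i else - w$i)"
proof -
  have "(J_mat n *\<^sub>v w)$i = (\<Sum>j<2*n. J_mat n $$ (i,j) * w$j)"
    using mult_vec_index[OF J_carrier assms] .
  also have "\<dots> = (\<Sum>j<2*n. if j = i then (if i < n then w$i else - w$i) else 0)"
    using assms by (intro sum.cong) (auto simp: J_mat_def)
  also have "\<dots> = (if i < n then w$i else - w$i)" using assms by simp
  finally show ?thesis .
qed

lemma jform_add1: "x \<in> carrier_vec (2*n) \<Longrightarrow> y \<in> carrier_vec (2*n) \<Longrightarrow> jform n (x + y) z = jform n x z + jform n y z"
  unfolding jform_def using J_carrier[of n] by (simp add: mult_add_distrib_mat_vec ip_add1)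
lemma jform_add2: "y \<in> carrier_vec (2*n) \<Longrightarrow> z \<in> carrier_vec (2*n) \<Longrightarrow> jform n x (y + z) = jform n x y + jform n x z"
  unfolding jform_def by (simp add: ip_add2)
lemma jform_smult1: "x \<in> carrier_vec (2*n) \<Longrightarrow> jform n (a \<cdot>\<^sub>v x) z = a * jform n x z"
  unfolding jform_def using J_carrier[of n] by (simp add: mult_mat_vec ip_smult1)
lemma jform_smult2: "y \<in> carrier_vec (2*n) \<Longrightarrow> jform n x (a \<cdot>\<^sub>v y) = cnj a * jform n x y"
  unfolding jform_def by (simp add: ip_smult2)
lemma mat_vec_zero: "A \<in> carrier_mat N M \<Longrightarrow> A *\<^sub>v 0\<^sub>v M = 0\<^sub>v N"
  by (intro eq_vecI) (auto simp: scalar_prod_def)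

lemma jform_zero1: "jform n (0\<^sub>v (2*n)) z = 0" unfolding jform_def
  using mat_vec_zero[OF J_carrier[of n]] by (simp add: ip_zero1)
lemma jform_zero2: "jform n x (0\<^sub>v (2*n)) = 0" unfolding jform_def by (simp add: ip_zero2)

lemma jform_nondeg: assumes w: "w \<in> carrier_vec (2*n)" and "\<forall>v \<in> carrier_vec (2*n). jform n w v = 0"
  shows "w = 0\<^sub>v (2*n)"
proof -
  have Jw: "J_mat n *\<^sub>v w \<in> carrier_vec (2*n)" using J_carrier[of n] w by auto
  have "ip (2*n) (J_mat n *\<^sub>v w) (J_mat n *\<^sub>v w) = 0" using assms Jw unfolding jform_def by auto
  then have "J_mat n *\<^sub>v w = 0\<^sub>v (2*n)" using ip_self_zero Jw by blast
  then show ?thesis using w J_index[OF w] by (intro eq_vecI) (auto simp: vec_eq_iff split: if_splits)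
qed

lemma jform_unitary:
  assumes T: "J_unitary n T" and x: "x \<in> carrier_vec (2*n)" and y: "y \<in> carrier_vec (2*n)"
  shows "jform n (T *\<^sub>v x) (T *\<^sub>v y) = jform n x y"
proof -
  have TC: "T \<in> carrier_mat (2*n) (2*n)" and TJ: "mat_adjoint T * J_mat n * T = J_mat n"
    using T unfolding J_unitary_def by auto
  have TA: "mat_adjoint T \<in> carrier_mat (2*n) (2*n)" using adjoint_carrier[OF TC] .
  have "jform n (T *\<^sub>v x) (T *\<^sub>v y) = ip (2*n) (mat_adjoint T *\<^sub>v (J_mat n *\<^sub>v (T *\<^sub>v x))) y"
    unfolding jform_def using ip_adj2[OF TC _ y, of "J_mat n *\<^sub>v (T *\<^sub>v x)"] J_carrier[of n] TC x by auto
  also have "mat_adjoint T *\<^sub>v (J_mat n *\<^sub>v (T *\<^sub>v x)) = (mat_adjoint T * J_mat n * T) *\<^sub>v x"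
    using TA J_carrier[of n] TC x by (simp add: assoc_mult_mat_vec[of _ "2*n" "2*n" _ "2*n"])
  finally show ?thesis unfolding TJ jform_def .
qed

lemma J_orth_aux:
  assumes T: "J_unitary n T" and z: "z * cnj mu \<noteq> 1"
  shows "\<forall>k1 k2 x y. k1 + k2 < s \<longrightarrow> (sh T z ^^ k1) x = 0\<^sub>v (2*n) \<longrightarrow> (sh T mu ^^ k2) y = 0\<^sub>v (2*n) \<longrightarrow> 
    x \<in> carrier_vec (2*n) \<longrightarrow> y \<in> carrier_vec (2*n) \<longrightarrow> jform n x y = 0"
proof (induct s)
  case 0 then show ?case by auto
next
  case (Suc s)
  have TC: "T \<in> carrier_mat (2*n) (2*n)" using T unfolding J_unitary_def by auto
  show ?case
  proof (intro allI impI)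
    fix k1 k2 x y assume ks: "k1 + k2 < Suc s" and hk1: "(sh T z ^^ k1) x = 0\<^sub>v (2*n)"
      and hk2: "(sh T mu ^^ k2) y = 0\<^sub>v (2*n)" and xc0: "x \<in> carrier_vec (2*n)" and yc0: "y \<in> carrier_vec (2*n)"
    show "jform n x y = 0"
    proof (cases "k1 = 0 \<or> k2 = 0")
      case True then show ?thesis using hk1 hk2 by (auto simp: jform_zero1 jform_zero2)
    next
      case False
      then obtain l1 l2 where k: "k1 = Suc l1" "k2 = Suc l2" by (cases k1; cases k2) auto
      let ?x = "sh T z x" and ?y = "sh T mu y"
      have xc: "?x \<in> carrier_vec (2*n)" "?y \<in> carrier_vec (2*n)" using sh_carrier[OF TC] xc0 yc0 by auto
      have hx: "(sh T z ^^ l1) ?x = 0\<^sub>v (2*n)" using hk1 k by (simp add: funpow_Suc_right del: funpow.simps)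
      have hy: "(sh T mu ^^ l2) ?y = 0\<^sub>v (2*n)" using hk2 k by (simp add: funpow_Suc_right del: funpow.simps)
      have e1: "jform n ?x ?y = 0" using Suc.hyps[rule_format, of l1 l2 ?x ?y] k ks hx hy xc by auto
      have e2: "jform n ?x y = 0" using Suc.hyps[rule_format, of l1 k2 ?x y] k ks hx hk2 xc yc0 by auto
      have e3: "jform n x ?y = 0" using Suc.hyps[rule_format, of k1 l2 x ?y] k ks hk1 hy xc xc0 by auto
      have Tx: "T *\<^sub>v x = ?x + z \<cdot>\<^sub>v x" "T *\<^sub>v y = ?y + mu \<cdot>\<^sub>v y" using xc0 yc0 TC unfolding sh_def
        by (auto intro!: eq_vecI)
      have "jform n x y = jform n (T *\<^sub>v x) (T *\<^sub>v y)" using jform_unitary[OF T] xc0 yc0 by simp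
      also have "\<dots> = jform n ?x ?y + cnj mu * jform n ?x y + z * jform n x ?y + z * cnj mu * jform n x y"
        unfolding Tx using xc xc0 yc0
        by (simp add: jform_add1 jform_add2 jform_smult1 jform_smult2 algebra_simps)
      finally have "jform n x y * (1 - z * cnj mu) = 0" using e1 e2 e3 by (simp add: algebra_simps)
      then show ?thesis using z by simp
    qed
  qed
qed

lemma J_orth:
  assumes T: "J_unitary n T" and z: "z * cnj mu \<noteq> 1"
  shows "(sh T z ^^ k1) x = 0\<^sub>v (2*n) \<Longrightarrow> (sh T mu ^^ k2) y = 0\<^sub>v (2*n) \<Longrightarrow> 
    x \<in> carrier_vec (2*n) \<Longrightarrow> y \<in> carrier_vec (2*n) \<Longrightarrow> jform n x y = 0"
  using J_orth_aux[OF T z, of "Suc (k1 + k2)"] by auto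

lemma J_orth_gen:
  assumes T: "J_unitary n T" and z: "z * cnj mu \<noteq> 1"
  and x: "x \<in> gen_eigenspace T z" and y: "y \<in> gen_eigenspace T mu"
  shows "jform n x y = 0"
proof -
  have TC: "T \<in> carrier_mat (2*n) (2*n)" using T unfolding J_unitary_def by auto
  from x y obtain k1 k2 where "(sh T z ^^ k1) x = 0\<^sub>v (2*n)" "(sh T mu ^^ k2) y = 0\<^sub>v (2*n)"
    "x \<in> carrier_vec (2*n)" "y \<in> carrier_vec (2*n)" using gen_eig_iff[OF TC] by blast
  then show ?thesis using J_orth[OF T z] by blast
qed
lemma ip_minus1: "x \<in> carrier_vec N \<Longrightarrow> y \<in> carrier_vec N \<Longrightarrow> ip N (x - y) z = ip N x z - ip N y z"
  unfolding ip_def by (simp add: sum_subtractf algebra_simps)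
lemma ip_minus2: "y \<in> carrier_vec N \<Longrightarrow> z \<in> carrier_vec N \<Longrightarrow> ip N x (y - z) = ip N x y - ip N x z"
  unfolding ip_def by (simp add: sum_subtractf algebra_simps)

lemma herm_ip: assumes M: "M \<in> carrier_mat k k" "\<forall>x\<in>carrier_vec k. \<forall>y\<in>carrier_vec k. ip k (M *\<^sub>v x) y = ip k x (M *\<^sub>v y)"
  and x: "x \<in> carrier_vec k" and y: "y \<in> carrier_vec k"
  shows "ip k (M *\<^sub>v x) y = ip k x (M *\<^sub>v y)"
  using M(2) x y by auto

lemma herm_ip_sh: assumes M: "M \<in> carrier_mat k k" "\<forall>x\<in>carrier_vec k. \<forall>y\<in>carrier_vec k. ip k (M *\<^sub>v x) y = ip k x (M *\<^sub>v y)" and l: "cnj lam = lam"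
  and x: "x \<in> carrier_vec k" and y: "y \<in> carrier_vec k"
  shows "ip k (sh M lam x) y = ip k x (sh M lam y)"
  unfolding sh_def using M x y l
  by (simp add: ip_minus1 ip_minus2 ip_smult1 ip_smult2 herm_ip)

lemma herm_orth_aux:
  assumes M: "M \<in> carrier_mat k k" "\<forall>x\<in>carrier_vec k. \<forall>y\<in>carrier_vec k. ip k (M *\<^sub>v x) y = ip k x (M *\<^sub>v y)" and z: "lam \<noteq> cnj mu"
  shows "\<forall>k1 k2 x y. k1 + k2 < s \<longrightarrow> (sh M lam ^^ k1) x = 0\<^sub>v k \<longrightarrow> (sh M mu ^^ k2) y = 0\<^sub>v k \<longrightarrow> 
    x \<in> carrier_vec k \<longrightarrow> y \<in> carrier_vec k \<longrightarrow> ip k x y = 0"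
proof (induct s)
  case 0 then show ?case by auto
next
  case (Suc s)
  show ?case
  proof (intro allI impI)
    fix k1 k2 x y assume ks: "k1 + k2 < Suc s" and hk1: "(sh M lam ^^ k1) x = 0\<^sub>v k"
      and hk2: "(sh M mu ^^ k2) y = 0\<^sub>v k" and xc0: "x \<in> carrier_vec k" and yc0: "y \<in> carrier_vec k"
    show "ip k x y = 0"
    proof (cases "k1 = 0 \<or> k2 = 0")
      case True then show ?thesis using hk1 hk2 by (auto simp: ip_zero1 ip_zero2)
    next
      case False
      then obtain l1 l2 where kk: "k1 = Suc l1" "k2 = Suc l2" by (cases k1; cases k2) auto
      let ?x = "sh M lam x" and ?y = "sh M mu y"
      have xc: "?x \<in> carrier_vec k" "?y \<in> carrier_vec k" using sh_carrier[OF M(1)] xc0 yc0 by auto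
      have hx: "(sh M lam ^^ l1) ?x = 0\<^sub>v k" using hk1 kk by (simp add: funpow_Suc_right del: funpow.simps)
      have hy: "(sh M mu ^^ l2) ?y = 0\<^sub>v k" using hk2 kk by (simp add: funpow_Suc_right del: funpow.simps)
      have e2: "ip k ?x y = 0" using Suc.hyps[rule_format, of l1 k2 ?x y] kk ks hx hk2 xc yc0 by auto
      have e3: "ip k x ?y = 0" using Suc.hyps[rule_format, of k1 l2 x ?y] kk ks hk1 hy xc xc0 by auto
      have Mx: "M *\<^sub>v x = ?x + lam \<cdot>\<^sub>v x" "M *\<^sub>v y = ?y + mu \<cdot>\<^sub>v y" using xc0 yc0 M unfolding sh_def
        by (auto intro!: eq_vecI)
      have "ip k (M *\<^sub>v x) y = ip k x (M *\<^sub>v y)" using herm_ip[OF M xc0 yc0] .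
      then have "ip k ?x y + lam * ip k x y = ip k x ?y + cnj mu * ip k x y"
        unfolding Mx using xc xc0 yc0 by (simp add: ip_add1 ip_add2 ip_smult1 ip_smult2)
      then have "ip k x y * (lam - cnj mu) = 0" using e2 e3 by (simp add: algebra_simps)
      then show ?thesis using z by simp
    qed
  qed
qed

lemma herm_orth:
  assumes M: "M \<in> carrier_mat k k" "\<forall>x\<in>carrier_vec k. \<forall>y\<in>carrier_vec k. ip k (M *\<^sub>v x) y = ip k x (M *\<^sub>v y)" and z: "lam \<noteq> cnj mu"
  and x: "x \<in> gen_eigenspace M lam" and y: "y \<in> gen_eigenspace M mu"
  shows "ip k x y = 0"
proof -
  from x y obtain k1 k2 where "(sh M lam ^^ k1) x = 0\<^sub>v k" "(sh M mu ^^ k2) y = 0\<^sub>v k"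
    "x \<in> carrier_vec k" "y \<in> carrier_vec k" using gen_eig_iff[OF M(1)] by blast
  then show ?thesis using herm_orth_aux[OF M z, of "Suc (k1 + k2)"] by auto
qed

lemma herm_real:
  assumes M: "M \<in> carrier_mat k k" "\<forall>x\<in>carrier_vec k. \<forall>y\<in>carrier_vec k. ip k (M *\<^sub>v x) y = ip k x (M *\<^sub>v y)"
  and x: "x \<in> gen_eigenspace M lam" and x0: "x \<noteq> 0\<^sub>v k"
  shows "cnj lam = lam"
proof (rule ccontr)
  assume "cnj lam \<noteq> lam"
  then have "lam \<noteq> cnj lam" by auto
  from herm_orth[OF M this x x] have "ip k x x = 0" .
  then show False using ip_self_zero x0 x gen_eig_iff[OF M(1)] by blast
qed

lemma herm_eig:
  assumes M: "M \<in> carrier_mat k k" "\<forall>x\<in>carrier_vec k. \<forall>y\<in>carrier_vec k. ip k (M *\<^sub>v x) y = ip k x (M *\<^sub>v y)" and l: "cnj lam = lam"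
  and x: "x \<in> gen_eigenspace M lam"
  shows "sh M lam x = 0\<^sub>v k"
proof -
  have step: "\<And>w. w \<in> carrier_vec k \<Longrightarrow> sh M lam (sh M lam w) = 0\<^sub>v k \<Longrightarrow> sh M lam w = 0\<^sub>v k"
  proof -
    fix w assume w: "w \<in> carrier_vec k" and h: "sh M lam (sh M lam w) = 0\<^sub>v k"
    have "ip k (sh M lam w) (sh M lam w) = ip k w (sh M lam (sh M lam w))"
      using herm_ip_sh[OF M l w sh_carrier[OF M(1) w]] .
    also have "\<dots> = 0" using h by (simp add: ip_zero2)
    finally show "sh M lam w = 0\<^sub>v k" using ip_self_zero sh_carrier[OF M(1) w] by blast
  qed
  have main: "\<And>j. \<forall>v. v \<in> carrier_vec k \<longrightarrow> (sh M lam ^^ Suc j) v = 0\<^sub>v k \<longrightarrow> sh M lam v = 0\<^sub>v k"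
  proof -
    fix j show "\<forall>v. v \<in> carrier_vec k \<longrightarrow> (sh M lam ^^ Suc j) v = 0\<^sub>v k \<longrightarrow> sh M lam v = 0\<^sub>v k"
    proof (induct j)
      case 0 then show ?case by simp
    next
      case (Suc j)
      show ?case
      proof (intro allI impI)
        fix v assume v: "v \<in> carrier_vec k" and h: "(sh M lam ^^ Suc (Suc j)) v = 0\<^sub>v k"
        have "(sh M lam ^^ Suc (Suc j)) v = sh M lam (sh M lam ((sh M lam ^^ j) v))"
          by simp
        then have "sh M lam ((sh M lam ^^ j) v) = 0\<^sub>v k"
          using step[OF shpow_carrier[OF M(1) v]] h by simp
        then have "(sh M lam ^^ Suc j) v = 0\<^sub>v k" by simp
        then show "sh M lam v = 0\<^sub>v k" using Suc v by blast
      qed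
    qed
  qed
  from x obtain kk where xc: "x \<in> carrier_vec k" and kk: "(sh M lam ^^ kk) x = 0\<^sub>v k"
    using gen_eig_iff[OF M(1)] by blast
  have "(sh M lam ^^ Suc kk) x = 0\<^sub>v k" using kk M by (simp add: sh_zero)
  then show ?thesis using main xc by blast
qed
lemma TK:
  assumes A: "(A :: complex mat) \<in> carrier_mat N m" and ker: "\<forall>x \<in> carrier_vec m. A *\<^sub>v x = 0\<^sub>v N \<longrightarrow> x = 0\<^sub>v m"
  shows "m \<le> N"
proof (rule ccontr)
  assume "\<not> m \<le> N"
  then have mN: "N < m" by auto
  define B where "B = mat m m (\<lambda>(i,j). if i < N then A$$(i,j) else 0)"
  have BC: "B \<in> carrier_mat m m" unfolding B_def by auto
  have BT: "transpose_mat B \<in> carrier_mat m m" using BC by auto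
  have "transpose_mat B *\<^sub>v unit_vec m (m - 1) = 0\<^sub>v m"
    using mN unfolding B_def by (intro eq_vecI) (auto simp: scalar_prod_def)
  moreover have "unit_vec m (m - 1) \<noteq> 0\<^sub>v m" using mN
    by (metis diff_less gr_implies_not_zero index_unit_vec(1) index_zero_vec(1) less_one neq0_conv zero_neq_one)
  ultimately have "det (transpose_mat B) = 0" using det_0_iff_vec_prod_zero[OF BT] by force
  then have "det B = 0" using det_transpose[OF BC] by simp
  then obtain v where v: "v \<in> carrier_vec m" "v \<noteq> 0\<^sub>v m" "B *\<^sub>v v = 0\<^sub>v m"
    using det_0_iff_vec_prod_zero[OF BC] by auto
  have "A *\<^sub>v v = 0\<^sub>v N"
  proof (intro eq_vecI)
    fix i assume i: "i < dim_vec (0\<^sub>v N)"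
    have iN: "i < N" "i < m" using i mN by auto
    have "(B *\<^sub>v v)$i = (\<Sum>j<m. B$$(i,j) * v$j)" using mult_vec_index[OF BC v(1) iN(2)] .
    also have "\<dots> = (\<Sum>j<m. A$$(i,j) * v$j)" unfolding B_def using iN by (auto intro!: sum.cong)
    also have "\<dots> = (A *\<^sub>v v)$i" using mult_vec_index[OF A v(1) iN(1)] by simp
    finally have "(A *\<^sub>v v)$i = (B *\<^sub>v v)$i" by simp
    also have "\<dots> = 0" unfolding v(3) using iN by simp
    finally show "(A *\<^sub>v v)$i = 0\<^sub>v N $ i" using iN by simp
  qed (use A in auto)
  then show False using ker v by auto
qed

lemma ip_mat1:
  assumes Y: "Y \<in> carrier_mat N m" and a: "a \<in> carrier_vec m"
  shows "ip N (Y *\<^sub>v a) x = (\<Sum>j<m. a$j * ip N (col Y j) x)"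
proof -
  have "ip N (Y *\<^sub>v a) x = (\<Sum>i<N. \<Sum>j<m. Y$$(i,j) * a$j * cnj (x$i))"
    unfolding ip_def using Y a by (simp add: mult_vec_index sum_distrib_right del: index_mult_mat_vec)
  also have "\<dots> = (\<Sum>j<m. \<Sum>i<N. Y$$(i,j) * a$j * cnj (x$i))" by (rule sum.swap)
  also have "\<dots> = (\<Sum>j<m. a$j * ip N (col Y j) x)"
    unfolding ip_def using Y by (auto simp: sum_distrib_left mult.commute mult.left_commute intro!: sum.cong)
  finally show ?thesis .
qed

lemma ip_mat2:
  assumes Y: "Y \<in> carrier_mat N m" and b: "b \<in> carrier_vec m"
  shows "ip N x (Y *\<^sub>v b) = (\<Sum>j<m. cnj (b$j) * ip N x (col Y j))"
proof -
  have "ip N x (Y *\<^sub>v b) = cnj (ip N (Y *\<^sub>v b) x)" by (rule ip_conj)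
  also have "\<dots> = (\<Sum>j<m. cnj (b$j) * ip N x (col Y j))"
    unfolding ip_mat1[OF Y b] by (simp add: ip_conj[of N x])
  finally show ?thesis .
qed

lemma jform_mat1:
  assumes Y: "Y \<in> carrier_mat (2*n) m" and a: "a \<in> carrier_vec m"
  shows "jform n (Y *\<^sub>v a) x = (\<Sum>j<m. a$j * jform n (col Y j) x)"
proof -
  have JY: "J_mat n * Y \<in> carrier_mat (2*n) m" using J_carrier[of n] Y by auto
  have "jform n (Y *\<^sub>v a) x = ip (2*n) ((J_mat n * Y) *\<^sub>v a) x" unfolding jform_def
    using J_carrier[of n] Y a by (simp add: assoc_mult_mat_vec[of _ "2*n" "2*n" _ m])
  also have "\<dots> = (\<Sum>j<m. a$j * ip (2*n) (col (J_mat n * Y) j) x)" using ip_mat1[OF JY a] .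
  also have "\<dots> = (\<Sum>j<m. a$j * jform n (col Y j) x)" unfolding jform_def
  proof (intro sum.cong refl)
    fix j assume "j \<in> {..<m}"
    then have "j < m" by simp
    then show "a$j * ip (2*n) (col (J_mat n * Y) j) x = a$j * ip (2*n) (J_mat n *\<^sub>v col Y j) x"
      using col_mult2[OF J_carrier[of n] Y] by simp
  qed
  finally show ?thesis .
qed

lemma jform_mat2:
  assumes Y: "Y \<in> carrier_mat (2*n) m" and b: "b \<in> carrier_vec m"
  shows "jform n x (Y *\<^sub>v b) = (\<Sum>j<m. cnj (b$j) * jform n x (col Y j))"
  unfolding jform_def using ip_mat2[OF Y b] by simp

lemma jform_expand: assumes "x \<in> carrier_vec (2*n)"
  shows "jform n x y = (\<Sum>i<2*n. (if i < n then 1 else -1) * (x$i * cnj (y$i)))"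
  unfolding jform_def ip_def using J_index[OF assms] by (auto intro!: sum.cong)
definition selmat :: "nat \<Rightarrow> nat list \<Rightarrow> complex mat" where
  "selmat nc is = mat nc (length is) (\<lambda>(l,j). if l = is!j then 1 else 0)"

lemma selmat_carrier: "selmat nc is \<in> carrier_mat nc (length is)" unfolding selmat_def by auto

lemma selmat_ker:
  assumes d: "distinct is" and s: "set is \<subseteq> {..<nc}" and c: "c \<in> carrier_vec (length is)"
  and z: "selmat nc is *\<^sub>v c = 0\<^sub>v nc"
  shows "c = 0\<^sub>v (length is)"
proof (intro eq_vecI)
  fix j assume j: "j < dim_vec (0\<^sub>v (length is))"
  then have j': "j < length is" by auto
  have isj: "is!j < nc" using s j' nth_mem by blast
  have "(selmat nc is *\<^sub>v c)$(is!j) = (\<Sum>j'<length is. (if is!j = is!j' then 1 else 0) * c$j')"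
    using mult_vec_index[OF selmat_carrier c isj] isj unfolding selmat_def by (auto intro!: sum.cong)
  also have "\<dots> = (\<Sum>j'<length is. if j' = j then c$j' else 0)"
    using d j' by (intro sum.cong) (auto simp: nth_eq_iff_index_eq)
  also have "\<dots> = c$j" using j' by simp
  finally show "c$j = 0\<^sub>v (length is) $ j" using z isj j' by simp
qed (use c in auto)

lemma sum_split_shift: "(\<Sum>j<a+b. f j) = (\<Sum>j<a. f j) + (\<Sum>j<b. f (a+j::nat)::'a::comm_monoid_add)"
  by (induct b) (auto simp: add.assoc)

lemma col_unit: assumes "(A :: complex mat) \<in> carrier_mat N M" "i < M" shows "A *\<^sub>v unit_vec M i = col A i"
proof (intro eq_vecI)
  fix k assume "k < dim_vec (col A i)"
  then have k: "k < N" using assms by auto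
  have "(A *\<^sub>v unit_vec M i)$k = (\<Sum>j<M. A$$(k,j) * unit_vec M i $ j)"
    using mult_vec_index[OF assms(1) _ k] by simp
  also have "\<dots> = (\<Sum>j<M. if j = i then A$$(k,i) else 0)" by (intro sum.cong) (auto simp: unit_vec_def)
  also have "\<dots> = A$$(k,i)" using assms by simp
  finally show "(A *\<^sub>v unit_vec M i)$k = col A i $ k" using k assms by simp
qed (use assms in auto)

lemma col_sel:
  assumes A: "A \<in> carrier_mat N nc" and s: "set is \<subseteq> {..<nc}" and j: "j < length is"
  shows "col (A * selmat nc is) j = col A (is!j)"
proof -
  have "col (selmat nc is) j = unit_vec nc (is!j)" unfolding selmat_def using j s
    by (intro eq_vecI) (auto simp: unit_vec_def)
  moreover have "is!j < nc" using s j nth_mem by blast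
  ultimately show ?thesis using A s j col_mult2[OF A selmat_carrier j] col_unit[OF A] by auto
qed

lemma sel_ker:
  assumes A: "A \<in> carrier_mat N nc" and ker: "\<forall>x \<in> carrier_vec nc. A *\<^sub>v x = 0\<^sub>v N \<longrightarrow> x = 0\<^sub>v nc"
  and d: "distinct is" and s: "set is \<subseteq> {..<nc}"
  shows "\<forall>x \<in> carrier_vec (length is). (A * selmat nc is) *\<^sub>v x = 0\<^sub>v N \<longrightarrow> x = 0\<^sub>v (length is)"
proof (intro ballI impI)
  fix x assume x: "x \<in> carrier_vec (length is)" and z: "(A * selmat nc is) *\<^sub>v x = 0\<^sub>v N"
  have "A *\<^sub>v (selmat nc is *\<^sub>v x) = 0\<^sub>v N" using z A x selmat_carrier[of nc "is"]
    by (simp add: assoc_mult_mat_vec[of _ N nc _ "length is"])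
  moreover have "selmat nc is *\<^sub>v x \<in> carrier_vec nc" using selmat_carrier[of nc "is"] x by auto
  ultimately have "selmat nc is *\<^sub>v x = 0\<^sub>v nc" using ker by auto
  then show "x = 0\<^sub>v (length is)" using selmat_ker[OF d s x] by auto
qed

definition catm :: "complex mat \<Rightarrow> complex mat \<Rightarrow> complex mat" where
  "catm A B = mat (dim_row A) (dim_col A + dim_col B)
     (\<lambda>(i,j). if j < dim_col A then A$$(i,j) else B$$(i, j - dim_col A))"

definition vtk :: "nat \<Rightarrow> complex vec \<Rightarrow> complex vec" where "vtk a c = vec a (\<lambda>j. c$j)"
definition vdr :: "nat \<Rightarrow> nat \<Rightarrow> complex vec \<Rightarrow> complex vec" where "vdr a b c = vec b (\<lambda>j. c$(a+j))"

lemma catm_carrier: "A \<in> carrier_mat N a \<Longrightarrow> B \<in> carrier_mat N b \<Longrightarrow> catm A B \<in> carrier_mat N (a+b)"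
  unfolding catm_def by auto

lemma catm_mult:
  assumes A: "A \<in> carrier_mat N a" and B: "B \<in> carrier_mat N b" and c: "c \<in> carrier_vec (a+b)"
  shows "catm A B *\<^sub>v c = A *\<^sub>v vtk a c + B *\<^sub>v vdr a b c"
proof (intro eq_vecI)
  fix i assume "i < dim_vec (A *\<^sub>v vtk a c + B *\<^sub>v vdr a b c)"
  then have i: "i < N" using A B by auto
  have "(catm A B *\<^sub>v c)$i = (\<Sum>j<a+b. catm A B $$ (i,j) * c$j)"
    using mult_vec_index[OF catm_carrier[OF A B] c i] .
  also have "\<dots> = (\<Sum>j<a. catm A B $$ (i,j) * c$j) + (\<Sum>j<b. catm A B $$ (i,a+j) * c$(a+j))"
    by (rule sum_split_shift)
  also have "\<dots> = (\<Sum>j<a. A $$ (i,j) * c$j) + (\<Sum>j<b. B $$ (i,j) * c$(a+j))"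
    unfolding catm_def using A B i by auto
  also have "\<dots> = (A *\<^sub>v vtk a c + B *\<^sub>v vdr a b c)$i"
    using A B i mult_vec_index[OF A, of "vtk a c" i] mult_vec_index[OF B, of "vdr a b c" i]
    by (simp add: vtk_def vdr_def)
  finally show "(catm A B *\<^sub>v c)$i = (A *\<^sub>v vtk a c + B *\<^sub>v vdr a b c)$i" .
qed (use A B in \<open>auto simp: catm_def\<close>)

lemma vtk_vdr_zero: assumes c: "c \<in> carrier_vec (a+b)" and "vtk a c = 0\<^sub>v a" "vdr a b c = 0\<^sub>v b"
  shows "c = 0\<^sub>v (a+b)"
proof (intro eq_vecI)
  fix i assume "i < dim_vec (0\<^sub>v (a+b))"
  then have i: "i < a + b" by auto
  show "c$i = 0\<^sub>v (a+b) $ i"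
  proof (cases "i < a")
    case True then show ?thesis using assms(2) i unfolding vtk_def by (metis index_vec index_zero_vec(1))
  next
    case False then have "i = a + (i - a)" "i - a < b" using i by auto
    then show ?thesis using assms(3) i unfolding vdr_def by (metis index_vec index_zero_vec(1))
  qed
qed (use c in auto)
lemma vanish_lemma:
  assumes x: "x \<in> carrier_vec (2*n)" and s: "s = 1 \<or> s = (-1::real)"
  and van: "\<And>i. i < 2*n \<Longrightarrow> (if s = 1 then i < n else n \<le> i) \<Longrightarrow> x$i = 0"
  and nn: "0 \<le> s * Re (jform n x x)"
  shows "x = 0\<^sub>v (2*n)"
proof -
  have trm: "s * Re ((if i < n then 1 else -1) * (x$i * cnj (x$i))) = - ((Re (x$i))^2 + (Im (x$i))^2)"
    if i: "i < 2*n" for i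
  proof (cases "x$i = 0")
    case True then show ?thesis by simp
  next
    case False
    then have "\<not> (if s = 1 then i < n else n \<le> i)" using van i by blast
    then show ?thesis using s by (cases "s = 1") (auto simp: complex_mult_cnj power2_eq_square)
  qed
  have "s * Re (jform n x x) = (\<Sum>i<2*n. s * Re ((if i < n then 1 else -1) * (x$i * cnj (x$i))))"
    unfolding jform_expand[OF x] by (simp add: Re_sum sum_distrib_left)
  also have "\<dots> = (\<Sum>i<2*n. - ((Re (x$i))^2 + (Im (x$i))^2))"
    by (intro sum.cong refl trm) auto
  also have "\<dots> = - (\<Sum>i<2*n. (Re (x$i))^2 + (Im (x$i))^2)"
    by (rule sum_negf)
  finally have "(\<Sum>i<2*n. (Re (x$i))^2 + (Im (x$i))^2) \<le> 0" using nn by simp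
  moreover have "0 \<le> (\<Sum>i<2*n. (Re (x$i))^2 + (Im (x$i))^2)" by (intro sum_nonneg) auto
  ultimately have "(\<Sum>i<2*n. (Re (x$i))^2 + (Im (x$i))^2) = 0" by simp
  then have "\<forall>i\<in>{..<2*n}. (Re (x$i))^2 + (Im (x$i))^2 = 0" by (subst sum_nonneg_eq_0_iff[symmetric]) auto
  then have "\<forall>i<2*n. Re (x$i) = 0 \<and> Im (x$i) = 0" by (auto simp: add_nonneg_eq_0_iff)
  then show ?thesis using x by (intro eq_vecI) (auto simp: complex_eq_iff)
qed

lemma NL:
  assumes X: "X \<in> carrier_mat (2*n) m" and ker: "\<forall>c \<in> carrier_vec m. X *\<^sub>v c = 0\<^sub>v (2*n) \<longrightarrow> c = 0\<^sub>v m"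
  and s: "s = 1 \<or> s = (-1::real)"
  and nn: "\<forall>c \<in> carrier_vec m. 0 \<le> s * Re (jform n (X *\<^sub>v c) (X *\<^sub>v c))"
  shows "m \<le> n"
proof -
  define off where "off = (if s = 1 then 0 else n)"
  define X1 where "X1 = mat n m (\<lambda>(i,j). X$$(off + i,j))"
  have X1C: "X1 \<in> carrier_mat n m" unfolding X1_def by auto
  have "\<forall>c \<in> carrier_vec m. X1 *\<^sub>v c = 0\<^sub>v n \<longrightarrow> c = 0\<^sub>v m"
  proof (intro ballI impI)
    fix c assume c: "c \<in> carrier_vec m" and z: "X1 *\<^sub>v c = 0\<^sub>v n"
    let ?x = "X *\<^sub>v c"
    have xc: "?x \<in> carrier_vec (2*n)" using X c by auto
    have "?x = 0\<^sub>v (2*n)"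
    proof (rule vanish_lemma[OF xc s])
      fix i assume i: "i < 2*n" and ii: "if s = 1 then i < n else n \<le> i"
      define i' where "i' = i - off"
      have i': "i' < n" "i = off + i'" using i ii unfolding i'_def off_def by (auto split: if_splits)
      have "(X1 *\<^sub>v c)$i' = (\<Sum>j<m. X1$$(i',j) * c$j)" using mult_vec_index[OF X1C c i'(1)] .
      also have "\<dots> = (\<Sum>j<m. X$$(i,j) * c$j)" unfolding X1_def using i' by auto
      also have "\<dots> = ?x$i" using mult_vec_index[OF X c i] by simp
      finally show "?x$i = 0" using z i' by simp
    next
      show "0 \<le> s * Re (jform n ?x ?x)" using nn c by auto
    qed
    then show "c = 0\<^sub>v m" using ker c by auto
  qed
  then show ?thesis using TK[OF X1C] by auto
qed

lemma jform_neg_neg: "x \<in> carrier_vec (2*n) \<Longrightarrow> jform n ((-1) \<cdot>\<^sub>v x) ((-1) \<cdot>\<^sub>v x) = jform n x x"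
  by (simp add: jform_smult1 jform_smult2)

lemma pair_bound:
  assumes Z: "Z \<in> carrier_mat (2*n) a" and V: "V \<in> carrier_mat (2*n) b"
  and Vker: "\<forall>d \<in> carrier_vec b. V *\<^sub>v d = 0\<^sub>v (2*n) \<longrightarrow> d = 0\<^sub>v b"
  and s: "s = 1 \<or> s = (-1::real)"
  and Zdef: "\<forall>c \<in> carrier_vec a. c \<noteq> 0\<^sub>v a \<longrightarrow> 0 < s * Re (jform n (Z *\<^sub>v c) (Z *\<^sub>v c))"
  and neut: "\<forall>d \<in> carrier_vec b. \<forall>d' \<in> carrier_vec b. jform n (V *\<^sub>v d) (V *\<^sub>v d') = 0"
  and cross: "\<forall>c \<in> carrier_vec a. \<forall>d \<in> carrier_vec b. jform n (Z *\<^sub>v c) (V *\<^sub>v d) = 0 \<and> jform n (V *\<^sub>v d) (Z *\<^sub>v c) = 0"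
  shows "a + b \<le> n"
proof -
  let ?X = "catm Z V"
  have XC: "?X \<in> carrier_mat (2*n) (a+b)" using catm_carrier[OF Z V] .
  have Z0: "Z *\<^sub>v 0\<^sub>v a = 0\<^sub>v (2*n)" using mat_vec_zero[OF Z] .
  have ker: "\<forall>c \<in> carrier_vec (a+b). ?X *\<^sub>v c = 0\<^sub>v (2*n) \<longrightarrow> c = 0\<^sub>v (a+b)"
  proof (intro ballI impI)
    fix c assume c: "c \<in> carrier_vec (a+b)" and z: "?X *\<^sub>v c = 0\<^sub>v (2*n)"
    let ?c1 = "vtk a c" and ?c2 = "vdr a b c"
    have cc: "?c1 \<in> carrier_vec a" "?c2 \<in> carrier_vec b" unfolding vtk_def vdr_def by auto
    have vc: "Z *\<^sub>v ?c1 \<in> carrier_vec (2*n)" "V *\<^sub>v ?c2 \<in> carrier_vec (2*n)" using Z V cc by auto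
    have sum0: "Z *\<^sub>v ?c1 + V *\<^sub>v ?c2 = 0\<^sub>v (2*n)" using z catm_mult[OF Z V c] by simp
    have eq: "Z *\<^sub>v ?c1 = (-1) \<cdot>\<^sub>v (V *\<^sub>v ?c2)"
    proof (intro eq_vecI)
      fix i assume i: "i < dim_vec ((-1) \<cdot>\<^sub>v (V *\<^sub>v ?c2))"
      then have i': "i < 2*n" using V by auto
      have "(Z *\<^sub>v ?c1 + V *\<^sub>v ?c2)$i = 0" unfolding sum0 using i' by simp
      then have "(Z *\<^sub>v ?c1)$i + (V *\<^sub>v ?c2)$i = 0" using i' vc V by simp
      then show "(Z *\<^sub>v ?c1)$i = ((-1) \<cdot>\<^sub>v (V *\<^sub>v ?c2))$i" using i' vc V
        by (simp add: add_eq_0_iff2)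
    qed (use Z V in auto)
    have "jform n (Z *\<^sub>v ?c1) (Z *\<^sub>v ?c1) = 0" unfolding eq using jform_neg_neg[OF vc(2)] neut cc by simp
    then have c1: "?c1 = 0\<^sub>v a"
    proof -
      assume h: "jform n (Z *\<^sub>v ?c1) (Z *\<^sub>v ?c1) = 0"
      show ?thesis
      proof (rule ccontr)
        assume "?c1 \<noteq> 0\<^sub>v a"
        then have "0 < s * Re (jform n (Z *\<^sub>v ?c1) (Z *\<^sub>v ?c1))" using Zdef cc by blast
        then show False using h by simp
      qed
    qed
    then have "V *\<^sub>v ?c2 = 0\<^sub>v (2*n)" using sum0 Z0 vc by simp
    then have c2: "?c2 = 0\<^sub>v b" using Vker cc by auto
    show "c = 0\<^sub>v (a+b)" using vtk_vdr_zero[OF c c1 c2] .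
  qed
  have nn: "\<forall>c \<in> carrier_vec (a+b). 0 \<le> s * Re (jform n (?X *\<^sub>v c) (?X *\<^sub>v c))"
  proof (intro ballI)
    fix c :: "complex vec" assume c: "c \<in> carrier_vec (a+b)"
    let ?c1 = "vtk a c" and ?c2 = "vdr a b c"
    have cc: "?c1 \<in> carrier_vec a" "?c2 \<in> carrier_vec b" unfolding vtk_def vdr_def by auto
    have vc: "Z *\<^sub>v ?c1 \<in> carrier_vec (2*n)" "V *\<^sub>v ?c2 \<in> carrier_vec (2*n)" using Z V cc by auto
    have "jform n (?X *\<^sub>v c) (?X *\<^sub>v c) = 
      jform n (Z *\<^sub>v ?c1) (Z *\<^sub>v ?c1) + jform n (V *\<^sub>v ?c2) (Z *\<^sub>v ?c1) +
      (jform n (Z *\<^sub>v ?c1) (V *\<^sub>v ?c2) + jform n (V *\<^sub>v ?c2) (V *\<^sub>v ?c2))"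
      unfolding catm_mult[OF Z V c] using vc by (simp only: jform_add1 jform_add2 add_carrier_vec)
    also have "\<dots> = jform n (Z *\<^sub>v ?c1) (Z *\<^sub>v ?c1)"
      using cross[rule_format, OF cc] neut[rule_format, OF cc(2) cc(2)] by simp
    finally have "jform n (?X *\<^sub>v c) (?X *\<^sub>v c) = jform n (Z *\<^sub>v ?c1) (Z *\<^sub>v ?c1)" .
    moreover have "0 \<le> s * Re (jform n (Z *\<^sub>v ?c1) (Z *\<^sub>v ?c1))"
    proof (cases "?c1 = 0\<^sub>v a")
      case True then show ?thesis using Z0 by (simp add: jform_zero1)
    next
      case False then show ?thesis using Zdef cc by (meson less_imp_le)
    qed
    ultimately show "0 \<le> s * Re (jform n (?X *\<^sub>v c) (?X *\<^sub>v c))" by simp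
  qed
  show ?thesis using NL[OF XC ker s nn] .
qed
lemma order_lin: "order a [:-e, 1:] = (if a = e then 1 else (0::nat))"
proof (cases "a = e")
  case True then show ?thesis using order_power_n_n[of a 1] by simp
next
  case False
  have "poly [:-e, 1:] a \<noteq> 0" using False by simp
  then show ?thesis using False by (simp add: order_0I)
qed

lemma order_lin_prod: "order (a::complex) (\<Prod>e\<leftarrow>es. [:-e, 1:]) = length (filter (\<lambda>e. e = a) es)"
proof (induct es)
  case Nil then show ?case by (simp add: order_0I)
next
  case (Cons e es)
  have "(\<Prod>e\<leftarrow>es. [:-e, 1::complex:]) \<noteq> 0" by (auto simp: prod_list_zero_iff)
  moreover have "[:-e, 1::complex:] \<noteq> 0" by simp
  ultimately have "[:-e, 1:] * (\<Prod>e\<leftarrow>es. [:-e, 1:]) \<noteq> 0" by (metis mult_eq_0_iff)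
  then have "order a ([:-e, 1:] * (\<Prod>e\<leftarrow>es. [:-e, 1:])) = order a [:-e, 1:] + order a (\<Prod>e\<leftarrow>es. [:-e, 1:])"
    by (rule order_mult)
  moreover have "(\<Prod>e\<leftarrow>(e#es). [:-e, 1:]) = [:-e, 1:] * (\<Prod>e\<leftarrow>es. [:-e, 1:])" by simp
  ultimately show ?case using Cons by (simp only: order_lin) auto
qed

lemma poly_lin_prod: "poly (\<Prod>e\<leftarrow>es. [:-e, 1:]) (a::complex) = 0 \<longleftrightarrow> a \<in> set es"
  by (auto simp: poly_prod_list prod_list_zero_iff o_def)

lemma sum_count_filter:
  "finite S \<Longrightarrow> {a. a \<in> set es \<and> P a} \<subseteq> S \<Longrightarrow> S \<subseteq> {a. P a} \<Longrightarrow>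
   (\<Sum>a\<in>S. length (filter (\<lambda>e. e = a) es)) = length (filter P es)"
proof (induct es)
  case Nil then show ?case by simp
next
  case (Cons e es)
  have "(\<Sum>a\<in>S. length (filter (\<lambda>x. x = a) (e # es))) =
        (\<Sum>a\<in>S. length (filter (\<lambda>x. x = a) es) + (if a = e then 1 else 0))"
    by (intro sum.cong) auto
  also have "\<dots> = (\<Sum>a\<in>S. length (filter (\<lambda>x. x = a) es)) + (if e \<in> S then 1 else 0)"
    using Cons.prems by (simp add: sum.distrib)
  also have "(\<Sum>a\<in>S. length (filter (\<lambda>x. x = a) es)) = length (filter P es)"
    using Cons by auto
  also have "(if e \<in> S then 1 else 0) = (if P e then 1 else (0::nat))" using Cons.prems by auto
  finally show ?case by simp
qed

lemma nu_pos_count: assumes "char_poly M = (\<Prod>e\<leftarrow>fs. [:-e, 1:])"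
  shows "nu_pos M = length (filter (\<lambda>e. e \<in> \<real> \<and> Re e > 0) fs)"
proof -
  have "{a. poly (char_poly M) a = 0 \<and> a \<in> \<real> \<and> Re a > 0} = {a. a \<in> set fs \<and> (a \<in> \<real> \<and> Re a > 0)}"
    unfolding assms poly_lin_prod by auto
  then show ?thesis unfolding nu_pos_def assms order_lin_prod
    using sum_count_filter[of "{a. a \<in> set fs \<and> (a \<in> \<real> \<and> Re a > 0)}" fs "\<lambda>e. e \<in> \<real> \<and> Re e > 0"]
    by auto
qed

lemma nu_neg_count: assumes "char_poly M = (\<Prod>e\<leftarrow>fs. [:-e, 1:])"
  shows "nu_neg M = length (filter (\<lambda>e. e \<in> \<real> \<and> Re e < 0) fs)"
proof -
  have "{a. poly (char_poly M) a = 0 \<and> a \<in> \<real> \<and> Re a < 0} = {a. a \<in> set fs \<and> (a \<in> \<real> \<and> Re a < 0)}"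
    unfolding assms poly_lin_prod by auto
  then show ?thesis unfolding nu_neg_def assms order_lin_prod
    using sum_count_filter[of "{a. a \<in> set fs \<and> (a \<in> \<real> \<and> Re a < 0)}" fs "\<lambda>e. e \<in> \<real> \<and> Re e < 0"]
    by auto
qed

lemma gen_eig_eigenvalue:
  assumes A: "A \<in> carrier_mat N N" and v: "v \<in> gen_eigenspace A c" and v0: "v \<noteq> 0\<^sub>v N"
  shows "eigenvalue A c"
proof -
  from v obtain k where vc: "v \<in> carrier_vec N" and k: "(sh A c ^^ k) v = 0\<^sub>v N" using gen_eig_iff[OF A] by auto
  define m where "m = (LEAST k. (sh A c ^^ k) v = 0\<^sub>v N)"
  have m: "(sh A c ^^ m) v = 0\<^sub>v N" unfolding m_def using k by (rule LeastI)
  have m0: "m \<noteq> 0" using m v0 by (auto)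
  then obtain l where l: "m = Suc l" by (cases m) auto
  have "(sh A c ^^ l) v \<noteq> 0\<^sub>v N"
  proof
    assume "(sh A c ^^ l) v = 0\<^sub>v N"
    then have "m \<le> l" unfolding m_def by (rule Least_le)
    then show False using l by simp
  qed
  moreover let ?w = "(sh A c ^^ l) v"
  have wc: "?w \<in> carrier_vec N" using shpow_carrier[OF A vc] .
  have "sh A c ?w = 0\<^sub>v N" using m l by simp
  then have "A *\<^sub>v ?w = c \<cdot>\<^sub>v ?w" using wc A unfolding sh_def
    by (intro eq_vecI) (auto simp: vec_eq_iff)
  ultimately show ?thesis unfolding eigenvalue_def eigenvector_def using A wc by auto
qed
lemma jform_conj: assumes x: "x \<in> carrier_vec (2*n)" and y: "y \<in> carrier_vec (2*n)"
  shows "jform n x y = cnj (jform n y x)"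
  unfolding jform_expand[OF x] jform_expand[OF y] by (auto simp: mult.commute intro!: sum.cong)

lemma span_orth:
  assumes G: "G \<subseteq> carrier_vec (2*n)" and h: "\<forall>g\<in>G. jform n g v = 0"
  shows "\<forall>e \<in> module.span class_ring (module_vec TYPE(complex) (2*n)) G. jform n e v = 0"
proof -
  interpret vs: vec_space "TYPE(complex)" "2*n" .
  define H where "H = {e \<in> carrier_vec (2*n). jform n e v = 0}"
  have sub: "LinearCombinations.submodule class_ring H (module_vec TYPE(complex) (2*n))"
    by (rule LinearCombinations.submodule.intro)
      (auto simp: H_def module_vec_simps jform_zero1 jform_add1 jform_smult1 intro: vec_module)
  have "G \<subseteq> H" using G h unfolding H_def by auto
  from vs.span_is_subset[OF this sub] show ?thesis unfolding H_def by auto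
qed

lemma ip_self_real: "ip N z z = of_real (\<Sum>i<N. (Re (z$i))^2 + (Im (z$i))^2)"
  unfolding ip_def by (simp add: complex_mult_cnj)

lemma ip_self_pos: assumes "z \<in> carrier_vec N" "z \<noteq> 0\<^sub>v N" shows "0 < Re (ip N z z)"
proof -
  have "0 \<le> (\<Sum>i<N. (Re (z$i))^2 + (Im (z$i))^2)" by (intro sum_nonneg) auto
  moreover have "(\<Sum>i<N. (Re (z$i))^2 + (Im (z$i))^2) \<noteq> 0"
  proof
    assume "(\<Sum>i<N. (Re (z$i))^2 + (Im (z$i))^2) = 0"
    then have "ip N z z = 0" by (simp add: ip_self_real)
    then show False using ip_self_zero assms by blast
  qed
  ultimately show ?thesis by (simp add: ip_self_real)
qed

lemma family_neutral:
  assumes V: "V \<in> carrier_mat (2*n) b"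
  and h: "\<And>j l. j < b \<Longrightarrow> l < b \<Longrightarrow> jform n (col V j) (col V l) = 0"
  shows "\<forall>d \<in> carrier_vec b. \<forall>d' \<in> carrier_vec b. jform n (V *\<^sub>v d) (V *\<^sub>v d') = 0"
proof (intro ballI)
  fix d d' :: "complex vec" assume d: "d \<in> carrier_vec b" and d': "d' \<in> carrier_vec b"
  have "jform n (V *\<^sub>v d) (V *\<^sub>v d') = (\<Sum>j<b. d$j * jform n (col V j) (V *\<^sub>v d'))"
    using jform_mat1[OF V d] .
  also have "\<dots> = (\<Sum>j<b. d$j * (\<Sum>l<b. cnj (d'$l) * jform n (col V j) (col V l)))"
    using jform_mat2[OF V d'] by simp
  also have "\<dots> = 0" using h by simp
  finally show "jform n (V *\<^sub>v d) (V *\<^sub>v d') = 0" .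
qed

lemma jform_Phi:
  assumes Phi: "Phi \<in> carrier_mat (2*n) k" and x: "x \<in> carrier_vec k" and y: "y \<in> carrier_vec k"
  shows "jform n (Phi *\<^sub>v x) (Phi *\<^sub>v y) = ip k ((mat_adjoint Phi * J_mat n * Phi) *\<^sub>v x) y"
proof -
  have PA: "mat_adjoint Phi \<in> carrier_mat k (2*n)" using adjoint_carrier[OF Phi] .
  have "jform n (Phi *\<^sub>v x) (Phi *\<^sub>v y) = ip k (mat_adjoint Phi *\<^sub>v (J_mat n *\<^sub>v (Phi *\<^sub>v x))) y"
    unfolding jform_def using ip_adj2[OF Phi _ y, of "J_mat n *\<^sub>v (Phi *\<^sub>v x)"] J_carrier[of n] Phi x by auto
  also have "mat_adjoint Phi *\<^sub>v (J_mat n *\<^sub>v (Phi *\<^sub>v x)) = (mat_adjoint Phi * J_mat n * Phi) *\<^sub>v x"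
    using PA J_carrier[of n] Phi x by (simp add: assoc_mult_mat_vec[of _ k "2*n" _ k] 
      assoc_mult_mat_vec[of _ "2*n" "2*n" _ k] assoc_mult_mat[of _ k "2*n" _ "2*n" _ k])
  finally show ?thesis .
qed
lemma eig_family_definite:
  assumes M: "M \<in> carrier_mat k k"
  and sa: "\<forall>x\<in>carrier_vec k. \<forall>y\<in>carrier_vec k. ip k (M *\<^sub>v x) y = ip k x (M *\<^sub>v y)"
  and U: "U \<in> carrier_mat k p" and Uker: "\<forall>x \<in> carrier_vec p. U *\<^sub>v x = 0\<^sub>v k \<longrightarrow> x = 0\<^sub>v p"
  and ev: "\<And>j. j < p \<Longrightarrow> M *\<^sub>v col U j = complex_of_real (lam j) \<cdot>\<^sub>v col U j"
  and sg: "sg = 1 \<or> sg = (-1::real)" and pos: "\<And>j. j < p \<Longrightarrow> 0 < sg * lam j"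
  and orth: "\<And>j l. j < p \<Longrightarrow> l < p \<Longrightarrow> lam j \<noteq> lam l \<Longrightarrow> ip k (col U j) (col U l) = 0"
  and c: "c \<in> carrier_vec p" "c \<noteq> 0\<^sub>v p"
  shows "0 < sg * Re (ip k (M *\<^sub>v (U *\<^sub>v c)) (U *\<^sub>v c))"
proof -
  define s where "s j = sqrt (sg * lam j)" for j
  define w where "w = vec p (\<lambda>j. complex_of_real (s j) * c$j)"
  have wc: "w \<in> carrier_vec p" unfolding w_def by auto
  have Uc: "U *\<^sub>v c \<in> carrier_vec k" "U *\<^sub>v w \<in> carrier_vec k" using U c wc by auto
  have MU: "M * U \<in> carrier_mat k p" using M U by auto
  have key: "lam j * ip k (col U j) (col U l) = sg * (s j * s l) * ip k (col U j) (col U l)"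
    if jl: "j < p" "l < p" for j l
  proof (cases "lam j = lam l")
    case True
    have p0: "0 \<le> sg * lam l" using pos[OF jl(2)] by simp
    have "s j * s l = sg * lam l" unfolding s_def True using real_sqrt_mult_self[of "sg * lam l"] p0 by simp
    then have "sg * (s j * s l) = lam j" using sg True by auto
    then have "complex_of_real (sg * (s j * s l)) = complex_of_real (lam j)" by simp
    then have "complex_of_real (lam j) = complex_of_real sg * (complex_of_real (s j) * complex_of_real (s l))"
      by (simp only: of_real_mult)
    then show ?thesis by simp
  next
    case False then have "ip k (col U j) (col U l) = 0" using orth jl by blast
    then show ?thesis by simp
  qed
  define G where "G j l = ip k (col U j) (col U l)" for j l
  have "ip k (M *\<^sub>v (U *\<^sub>v c)) (U *\<^sub>v c) = ip k ((M * U) *\<^sub>v c) (U *\<^sub>v c)"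
    using M U c by (subst assoc_mult_mat_vec[of M k k U p c]) auto
  also have "\<dots> = (\<Sum>j<p. c$j * ip k (col (M * U) j) (U *\<^sub>v c))" using ip_mat1[OF MU c(1)] .
  also have "\<dots> = (\<Sum>j<p. c$j * (lam j * ip k (col U j) (U *\<^sub>v c)))"
  proof (intro sum.cong refl)
    fix j assume "j \<in> {..<p}"
    then have j: "j < p" by auto
    have "col (M * U) j = M *\<^sub>v col U j" using col_mult2[OF M U j] .
    then show "c$j * ip k (col (M * U) j) (U *\<^sub>v c) = c$j * (lam j * ip k (col U j) (U *\<^sub>v c))"
      using ev[OF j] U j by (simp add: ip_smult1)
  qed
  also have "\<dots> = (\<Sum>j<p. c$j * (lam j * (\<Sum>l<p. cnj (c$l) * G j l)))"
    unfolding G_def using ip_mat2[OF U c(1)] by simp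
  also have "\<dots> = (\<Sum>j<p. \<Sum>l<p. c$j * cnj (c$l) * (lam j * G j l))"
    by (simp only: sum_distrib_left) (simp only: mult.assoc mult.left_commute)
  also have "\<dots> = (\<Sum>j<p. \<Sum>l<p. sg * ((s j * c$j) * cnj (s l * c$l) * G j l))"
  proof (intro sum.cong refl)
    fix j l assume "j \<in> {..<p}" "l \<in> {..<p}"
    then have jl: "j < p" "l < p" by auto
    have "c$j * cnj (c$l) * (lam j * G j l) = c$j * cnj (c$l) * (sg * (s j * s l) * G j l)"
      using key[OF jl] unfolding G_def by simp
    also have "\<dots> = sg * ((s j * c$j) * cnj (s l * c$l) * G j l)" by (simp add: algebra_simps)
    finally show "c$j * cnj (c$l) * (lam j * G j l) = sg * ((s j * c$j) * cnj (s l * c$l) * G j l)" .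
  qed
  also have "\<dots> = sg * (\<Sum>j<p. \<Sum>l<p. w$j * cnj (w$l) * G j l)"
    unfolding w_def by (simp add: sum_distrib_left)
  also have "(\<Sum>j<p. \<Sum>l<p. w$j * cnj (w$l) * G j l) = (\<Sum>j<p. w$j * (\<Sum>l<p. cnj (w$l) * G j l))"
    by (simp only: sum_distrib_left) (simp only: mult.assoc)
  also have "\<dots> = ip k (U *\<^sub>v w) (U *\<^sub>v w)"
    by (subst ip_mat1[OF U wc]) (simp add: ip_mat2[OF U wc] G_def)
  finally have eq: "ip k (M *\<^sub>v (U *\<^sub>v c)) (U *\<^sub>v c) = sg * ip k (U *\<^sub>v w) (U *\<^sub>v w)" .
  have "w \<noteq> 0\<^sub>v p"
  proof
    assume w0: "w = 0\<^sub>v p"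
    have "c = 0\<^sub>v p"
    proof (intro eq_vecI)
      fix j assume "j < dim_vec (0\<^sub>v p)"
      then have j: "j < p" by simp
      have "w$j = 0" using w0 j by simp
      then have "complex_of_real (s j) * c$j = 0" unfolding w_def using j by simp
      moreover have "s j \<noteq> 0" using pos[OF j] unfolding s_def by (auto simp: mult_pos_pos)
      ultimately show "c$j = 0\<^sub>v p $ j" using j by simp
    qed (use c in auto)
    then show False using c by simp
  qed
  then have "U *\<^sub>v w \<noteq> 0\<^sub>v k" using Uker wc by auto
  then have "0 < Re (ip k (U *\<^sub>v w) (U *\<^sub>v w))" using ip_self_pos Uc by blast
  then show ?thesis unfolding eq using sg by auto
qed

lemma gen_eig_finite_span:
  fixes T :: "complex mat"
  assumes T: "T \<in> carrier_mat N N"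
  shows "\<exists>B. finite B \<and> B \<subseteq> gen_eigenspace T z \<and>
        gen_eigenspace T z \<subseteq> module.span class_ring (module_vec TYPE(complex) (dim_row T)) B"
proof -
  interpret vs: vec_space "TYPE(complex)" N .
  let ?G = "gen_eigenspace T z"
  have Gc: "?G \<subseteq> carrier_vec N" using T by (auto simp: gen_eig_iff)
  let ?P = "\<lambda>S. S \<subseteq> ?G \<and> vs.lin_indpt S"
  have bnd: "\<And>A. ?P A \<Longrightarrow> finite A \<and> card A \<le> N"
    using vs.li_le_dim[OF vs.fin_dim] Gc vs.dim_is_n by (metis order_trans)
  have P0: "?P {}" unfolding vs.lin_dep_def by auto
  obtain M where M: "finite M" "maximal M ?P" using maximal_exists[of ?P N "{}", OF bnd P0] by blast
  have MP: "M \<subseteq> ?G" "vs.lin_indpt M" using M(2) unfolding maximal_def by auto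
  have Mc: "M \<subseteq> carrier_vec N" using MP Gc by auto
  have "?G \<subseteq> vs.span M"
  proof
    fix g assume g: "g \<in> ?G"
    show "g \<in> vs.span M"
    proof (cases "g \<in> M")
      case True then show ?thesis using vs.in_own_span[OF Mc] by auto
    next
      case False
      show ?thesis
      proof (rule ccontr)
        assume ns: "g \<notin> vs.span M"
        have gc: "g \<in> carrier_vec N" using g Gc by auto
        have "vs.lin_indpt (M \<union> {g})" using vs.lin_dep_iff_in_span[OF Mc MP(2) _ False] gc ns by auto
        moreover have "M \<union> {g} \<subseteq> ?G" using MP g by auto
        ultimately have "M \<union> {g} = M" using M(2) unfolding maximal_def by blast
        then show False using False by auto
      qed
    qed
  qed
  then show ?thesis using M(1) MP T by auto
qed

lemma spec_eigenvalue:
  fixes T :: "complex mat"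
  assumes T: "T \<in> carrier_mat N N" and z: "z \<in> op_spectrum T"
  shows "eigenvalue T z"
proof -
  have C: "T - z \<cdot>\<^sub>m 1\<^sub>m N \<in> carrier_mat N N" using T by auto
  have "det (T - z \<cdot>\<^sub>m 1\<^sub>m N) = 0"
  proof (rule ccontr)
    assume "det (T - z \<cdot>\<^sub>m 1\<^sub>m N) \<noteq> 0"
    from det_non_zero_imp_unit[OF C this, of "()"] obtain B where
      B: "B \<in> carrier_mat N N" "B * (T - z \<cdot>\<^sub>m 1\<^sub>m N) = 1\<^sub>m N" "(T - z \<cdot>\<^sub>m 1\<^sub>m N) * B = 1\<^sub>m N"
      unfolding Units_def by (auto simp: ring_mat_def)
    then have "invertible_mat (T - z \<cdot>\<^sub>m 1\<^sub>m N)" unfolding invertible_mat_def inverts_mat_def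
      using C by auto
    then show False using z T unfolding op_spectrum_def by auto
  qed
  then obtain v where v: "v \<in> carrier_vec N" "v \<noteq> 0\<^sub>v N" "(T - z \<cdot>\<^sub>m 1\<^sub>m N) *\<^sub>v v = 0\<^sub>v N"
    using det_0_iff_vec_prod_zero[OF C] by auto
  have "T *\<^sub>v v = z \<cdot>\<^sub>v v" using v T
    by (intro eq_vecI) (auto simp: minus_mult_distrib_mat_vec vec_eq_iff)
  then show ?thesis unfolding eigenvalue_def eigenvector_def using v T by auto
qed

lemma finite_isolated:
  assumes "finite (S :: complex set)"
  shows "\<exists>e>0. \<forall>w\<in>S. cmod (w - z) < e \<longrightarrow> w = z"
proof (cases "S - {z} = {}")
  case True then show ?thesis by (intro exI[of _ 1]) auto
next
  case False
  define e where "e = Min ((\<lambda>w. cmod (w - z)) ` (S - {z}))"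
  have fin: "finite ((\<lambda>w. cmod (w - z)) ` (S - {z}))" using assms by auto
  have "e \<in> (\<lambda>w. cmod (w - z)) ` (S - {z})" unfolding e_def using Min_in[OF fin] False by auto
  then have "e > 0" by auto
  moreover have "\<forall>w\<in>S. cmod (w - z) < e \<longrightarrow> w = z"
  proof (intro ballI impI)
    fix w assume w: "w \<in> S" "cmod (w - z) < e"
    show "w = z"
    proof (rule ccontr)
      assume "w \<noteq> z"
      then have "e \<le> cmod (w - z)" unfolding e_def using fin w by (auto intro: Min_le)
      then show False using w by auto
    qed
  qed
  ultimately show ?thesis by blast
qed

lemma ess_gapped:
  fixes T :: "complex mat"
  assumes T: "T \<in> carrier_mat N N"
  shows "ess_S1_gapped T"
  unfolding ess_S1_gapped_def
proof (intro ballI impI)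
  fix z assume z: "z \<in> op_spectrum T"
  have ev: "eigenvalue T z" using spec_eigenvalue[OF T z] .
  have sub: "op_spectrum T \<subseteq> spectrum T" using spec_eigenvalue[OF T] unfolding spectrum_def by auto
  have "finite (op_spectrum T)" using card_finite_spectrum(1)[OF T] sub finite_subset by blast
  then obtain e where "e > 0" "\<forall>w\<in>op_spectrum T. cmod (w - z) < e \<longrightarrow> w = z"
    using finite_isolated by blast
  then show "discrete_spectrum_point T z" unfolding discrete_spectrum_point_def
    using z ev gen_eig_finite_span[OF T, of z] by blast
qed
lemma surj_of_ker:
  assumes V: "(V :: complex mat) \<in> carrier_mat N N" and ker: "\<forall>x \<in> carrier_vec N. V *\<^sub>v x = 0\<^sub>v N \<longrightarrow> x = 0\<^sub>v N"
  and x: "x \<in> carrier_vec N"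
  shows "\<exists>d \<in> carrier_vec N. V *\<^sub>v d = x"
proof -
  have "det V \<noteq> 0" using det_0_iff_vec_prod_zero[OF V] ker by auto
  from det_non_zero_imp_unit[OF V this, of "()"] obtain B where
    B: "B \<in> carrier_mat N N" "V * B = 1\<^sub>m N"
    unfolding Units_def by (auto simp: ring_mat_def)
  have "V *\<^sub>v (B *\<^sub>v x) = x" using B V x by (simp add: assoc_mult_mat_vec[symmetric, of V N N B N x])
  then show ?thesis using B x by (intro bexI[of _ "B *\<^sub>v x"]) auto
qed

lemma filter3:
  assumes "\<forall>x\<in>set xs. (P x \<and> \<not> Q x \<and> \<not> R x) \<or> (\<not> P x \<and> Q x \<and> \<not> R x) \<or> (\<not> P x \<and> \<not> Q x \<and> R x)"
  shows "length (filter P xs) + length (filter Q xs) + length (filter R xs) = length xs"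
  using assms by (induct xs) auto

lemma filter2:
  assumes "\<forall>x\<in>set xs. (P x \<and> \<not> Q x) \<or> (\<not> P x \<and> Q x)"
  shows "length (filter P xs) + length (filter Q xs) = length xs"
  using assms by (induct xs) auto

lemma filter_idx: "length (filter P xs) = length (filter (\<lambda>j. P (xs!j)) [0..<length xs])"
  unfolding length_filter_conv_card by (intro arg_cong[where f=card]) auto

lemma filt_props:
  shows "distinct (filter P [0..<m])" "set (filter P [0..<m]) \<subseteq> {..<m}"
    "\<And>j. j < length (filter P [0..<m]) \<Longrightarrow> filter P [0..<m] ! j < m \<and> P (filter P [0..<m] ! j)"
proof -
  show "distinct (filter P [0..<m])" by simp
  show "set (filter P [0..<m]) \<subseteq> {..<m}" by auto
  fix j assume "j < length (filter P [0..<m])"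
  then have "filter P [0..<m] ! j \<in> set (filter P [0..<m])" by (rule nth_mem)
  then show "filter P [0..<m] ! j < m \<and> P (filter P [0..<m] ! j)" by auto
qed

lemma cnj_ne_one: "cmod z * cmod w \<noteq> 1 \<Longrightarrow> z * cnj w \<noteq> 1"
proof
  assume "cmod z * cmod w \<noteq> 1" "z * cnj w = 1"
  then have "cmod (z * cnj w) = 1" by simp
  then show False using \<open>cmod z * cmod w \<noteq> 1\<close> by (simp add: norm_mult)
qed

lemma mod_out_mid: assumes "h > 0" "exp (-h) \<le> cmod z" "cmod w > exp h"
  shows "cmod z * cmod w \<noteq> 1" "cmod w * cmod z \<noteq> 1"
proof -
  have "exp (-h) * exp h \<le> cmod z * exp h" using assms by (intro mult_right_mono) auto
  also have "\<dots> < cmod z * cmod w" using assms by (intro mult_strict_left_mono) (auto intro: less_le_trans[of 0 "exp (-h)"])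
  finally have "1 < cmod z * cmod w" by (simp add: exp_minus field_simps)
  then show "cmod z * cmod w \<noteq> 1" "cmod w * cmod z \<noteq> 1" by (auto simp: mult.commute)
qed

lemma mod_in_mid: assumes "h > 0" "cmod z \<le> exp h" "cmod w < exp (-h)"
  shows "cmod z * cmod w \<noteq> 1" "cmod w * cmod z \<noteq> 1"
proof -
  have "cmod z * cmod w \<le> exp h * cmod w" using assms by (intro mult_right_mono) auto
  also have "\<dots> < exp h * exp (-h)" using assms by (intro mult_strict_left_mono) auto
  finally have "cmod z * cmod w < 1" by (simp add: exp_minus field_simps)
  then show "cmod z * cmod w \<noteq> 1" "cmod w * cmod z \<noteq> 1" by (auto simp: mult.commute)
qed

lemma mod_out_out: assumes "h > 0" "cmod z > exp h" "cmod w > exp h"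
  shows "cmod z * cmod w \<noteq> 1"
proof -
  have "1 < exp h" using assms by simp
  have "exp h * exp h < cmod z * cmod w" using assms
    by (intro mult_strict_mono) auto
  moreover have "1 \<le> exp h * exp h" using \<open>1 < exp h\<close>
    by (smt (verit) mult_less_cancel_right2)
  ultimately show ?thesis by auto
qed

lemma mod_in_in: assumes "h > 0" "cmod z < exp (-h)" "cmod w < exp (-h)"
  shows "cmod z * cmod w \<noteq> 1"
proof -
  have "exp (-h) < 1" using assms by simp
  have "cmod z * cmod w \<le> cmod z * exp (-h)" using assms by (intro mult_left_mono) auto
  also have "\<dots> < 1" using assms \<open>exp (-h) < 1\<close>
    by (smt (verit) mult_less_cancel_right2 norm_ge_zero exp_gt_zero) 
  finally show ?thesis by auto
qed
lemma Z_definite: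
  assumes PhiC: "Phi \<in> carrier_mat (2*n) k" and Mdef: "M = mat_adjoint Phi * J_mat n * Phi"
  and sa: "\<forall>x\<in>carrier_vec k. \<forall>y\<in>carrier_vec k. ip k (M *\<^sub>v x) y = ip k x (M *\<^sub>v y)"
  and Y: "Y \<in> carrier_mat k k" and Yker: "\<forall>x\<in>carrier_vec k. Y *\<^sub>v x = 0\<^sub>v k \<longrightarrow> x = 0\<^sub>v k"
  and Ygen: "\<forall>j<k. col Y j \<in> gen_eigenspace M (fs!j)"
  and freal: "\<And>j. j < k \<Longrightarrow> cnj (fs!j) = fs!j"
  and feig: "\<And>j. j < k \<Longrightarrow> M *\<^sub>v col Y j = fs!j \<cdot>\<^sub>v col Y j"
  and sg: "sg = 1 \<or> sg = (-1::real)"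
  and I: "I = filter (\<lambda>j. 0 < sg * Re (fs!j)) [0..<k]"
  and c: "c \<in> carrier_vec (length I)" "c \<noteq> 0\<^sub>v (length I)"
  shows "0 < sg * Re (jform n ((Phi * (Y * selmat k I)) *\<^sub>v c) ((Phi * (Y * selmat k I)) *\<^sub>v c))"
proof -
  let ?U = "Y * selmat k I"
  let ?p = "length I"
  have MC: "M \<in> carrier_mat k k" unfolding Mdef using PhiC adjoint_carrier[OF PhiC] J_carrier[of n] by auto
  have UC: "?U \<in> carrier_mat k ?p" using Y selmat_carrier by auto
  have fp: "distinct I" "set I \<subseteq> {..<k}" "\<And>j. j < ?p \<Longrightarrow> I!j < k \<and> 0 < sg * Re (fs!(I!j))"
  proof -
    show "distinct I" unfolding I by simp
    show "set I \<subseteq> {..<k}" unfolding I by auto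
    fix j assume "j < ?p"
    then show "I!j < k \<and> 0 < sg * Re (fs!(I!j))" unfolding I by (rule filt_props(3))
  qed
  have Uker: "\<forall>x \<in> carrier_vec ?p. ?U *\<^sub>v x = 0\<^sub>v k \<longrightarrow> x = 0\<^sub>v ?p"
    using sel_ker[OF Y Yker fp(1,2)] .
  have colU: "\<And>j. j < ?p \<Longrightarrow> col ?U j = col Y (I!j)" using col_sel[OF Y fp(2)] by auto
  have real: "\<And>j. j < k \<Longrightarrow> fs!j = complex_of_real (Re (fs!j))"
    using freal by (metis Reals_cnj_iff complex_is_Real_iff of_real_Re)
  have ev: "\<And>j. j < ?p \<Longrightarrow> M *\<^sub>v col ?U j = complex_of_real (Re (fs!(I!j))) \<cdot>\<^sub>v col ?U j"
    using colU feig fp(3) real by metis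
  have orth: "\<And>j l. j < ?p \<Longrightarrow> l < ?p \<Longrightarrow> Re (fs!(I!j)) \<noteq> Re (fs!(I!l)) \<Longrightarrow> ip k (col ?U j) (col ?U l) = 0"
  proof -
    fix j l assume jl: "j < ?p" "l < ?p" "Re (fs!(I!j)) \<noteq> Re (fs!(I!l))"
    have a: "I!j < k" "I!l < k" using fp(3) jl by auto
    have "fs!(I!j) \<noteq> cnj (fs!(I!l))" using freal[OF a(2)] jl(3) by auto
    then show "ip k (col ?U j) (col ?U l) = 0" unfolding colU[OF jl(1)] colU[OF jl(2)]
      using herm_orth[OF MC sa] Ygen a by blast
  qed
  have x: "?U *\<^sub>v c \<in> carrier_vec k" using UC c by auto
  have "(Phi * ?U) *\<^sub>v c = Phi *\<^sub>v (?U *\<^sub>v c)" using PhiC UC c by auto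
  then have "jform n ((Phi * ?U) *\<^sub>v c) ((Phi * ?U) *\<^sub>v c) = ip k (M *\<^sub>v (?U *\<^sub>v c)) (?U *\<^sub>v c)"
    using jform_Phi[OF PhiC x x] Mdef by simp
  moreover have "0 < sg * Re (ip k (M *\<^sub>v (?U *\<^sub>v c)) (?U *\<^sub>v c))"
    by (rule eig_family_definite[OF MC sa UC Uker ev sg _ orth c]) (use fp(3) in auto)
  ultimately show ?thesis by simp
qed
lemma sig_zero:
  fixes n k :: nat and T Phi :: "complex mat" and h :: real
  assumes JT: "J_unitary n T" and adm: "admissible_width T h"
    and iso: "isometry_onto Phi (2*n) k (E_eq T h)"
  shows "Sig_with n Phi = 0"
proof -
  interpret vs: vec_space "TYPE(complex)" "2*n" .
  have TC: "T \<in> carrier_mat (2*n) (2*n)" using JT unfolding J_unitary_def by auto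
  have hpos: "h > 0" using adm unfolding admissible_width_def by auto
  define Gmid where "Gmid = \<Union> {gen_eigenspace T z | z. eigenvalue T z \<and> exp (-h) \<le> cmod z \<and> cmod z \<le> exp h}"
  have Eeq: "E_eq T h = vs.span Gmid" unfolding E_eq_def Gmid_def using TC by simp
  have GmidC: "Gmid \<subseteq> carrier_vec (2*n)" using TC by (auto simp: Gmid_def gen_eig_iff)
  have PhiC: "Phi \<in> carrier_mat (2*n) k" and PP: "mat_adjoint Phi * Phi = 1\<^sub>m k"
    and img: "{Phi *\<^sub>v x | x. x \<in> carrier_vec k} = vs.span Gmid"
    using iso Eeq unfolding isometry_onto_def by auto
  have inE: "\<And>e. e \<in> vs.span Gmid \<Longrightarrow> \<exists>c\<in>carrier_vec k. e = Phi *\<^sub>v c" using img by blast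
  have PhiE: "\<And>c. c \<in> carrier_vec k \<Longrightarrow> Phi *\<^sub>v c \<in> vs.span Gmid" using img by blast
  have spanC: "\<And>e. e \<in> vs.span Gmid \<Longrightarrow> e \<in> carrier_vec (2*n)" using vs.span_closed[OF GmidC] by auto
  have crossE: "jform n e v = 0 \<and> jform n v e = 0"
    if e: "e \<in> vs.span Gmid" and v: "v \<in> gen_eigenspace T mu" and m: "cmod mu > exp h \<or> cmod mu < exp (-h)"
    for e v mu
  proof -
    have "\<forall>g\<in>Gmid. jform n g v = 0"
    proof
      fix g assume "g \<in> Gmid"
      then obtain z where z: "exp (-h) \<le> cmod z" "cmod z \<le> exp h" "g \<in> gen_eigenspace T z"
        unfolding Gmid_def by auto
      have "cmod z * cmod mu \<noteq> 1" using m mod_out_mid[OF hpos z(1)] mod_in_mid[OF hpos z(2)] by auto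
      then show "jform n g v = 0" using J_orth_gen[OF JT cnj_ne_one z(3) v] by simp
    qed
    then have e0: "jform n e v = 0" using span_orth[OF GmidC] e by blast
    have vc: "v \<in> carrier_vec (2*n)" using v TC by (auto simp: gen_eig_iff)
    show ?thesis using e0 jform_conj[OF vc spanC[OF e]] by simp
  qed
  define M where "M = mat_adjoint Phi * J_mat n * Phi"
  have MC: "M \<in> carrier_mat k k" unfolding M_def using PhiC adjoint_carrier[OF PhiC] J_carrier[of n] by auto
  have jP: "\<And>x y. x \<in> carrier_vec k \<Longrightarrow> y \<in> carrier_vec k \<Longrightarrow> jform n (Phi *\<^sub>v x) (Phi *\<^sub>v y) = ip k (M *\<^sub>v x) y"
    using jform_Phi[OF PhiC] unfolding M_def by blast
  have sa: "\<forall>x\<in>carrier_vec k. \<forall>y\<in>carrier_vec k. ip k (M *\<^sub>v x) y = ip k x (M *\<^sub>v y)"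
  proof (intro ballI)
    fix x y :: "complex vec" assume x: "x \<in> carrier_vec k" and y: "y \<in> carrier_vec k"
    have c: "Phi *\<^sub>v x \<in> carrier_vec (2*n)" "Phi *\<^sub>v y \<in> carrier_vec (2*n)" using PhiC x y by auto
    have "ip k (M *\<^sub>v x) y = jform n (Phi *\<^sub>v x) (Phi *\<^sub>v y)" using jP x y by simp
    also have "\<dots> = cnj (jform n (Phi *\<^sub>v y) (Phi *\<^sub>v x))" using jform_conj[OF c] .
    also have "\<dots> = cnj (ip k (M *\<^sub>v y) x)" using jP x y by simp
    also have "\<dots> = ip k x (M *\<^sub>v y)" by (metis ip_conj)
    finally show "ip k (M *\<^sub>v x) y = ip k x (M *\<^sub>v y)" .
  qed
  obtain fs where cpM: "char_poly M = (\<Prod>e\<leftarrow>fs. [:-e, 1:])" and lfs: "length fs = k"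
    using char_poly_factorized[OF MC] by blast
  obtain Y where Y: "Y \<in> carrier_mat k k" and Yker: "\<forall>x\<in>carrier_vec k. Y *\<^sub>v x = 0\<^sub>v k \<longrightarrow> x = 0\<^sub>v k"
    and Ygen: "\<forall>j<k. col Y j \<in> gen_eigenspace M (fs!j)"
    using gen_basis[OF MC cpM] by blast
  have ycol: "col Y j \<in> carrier_vec k \<and> col Y j \<noteq> 0\<^sub>v k" if j: "j < k" for j
  proof -
    have u: "unit_vec k j \<in> carrier_vec k" "unit_vec k j \<noteq> 0\<^sub>v k" using j
      by (auto simp: vec_eq_iff)
    have "Y *\<^sub>v unit_vec k j \<noteq> 0\<^sub>v k" using Yker u by auto
    then show ?thesis using col_unit[OF Y j] Y j by auto
  qed
  have freal: "cnj (fs!j) = fs!j" if j: "j < k" for j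
    using herm_real[OF MC sa, of "col Y j" "fs!j"] Ygen ycol[OF j] j by auto
  have feig: "M *\<^sub>v col Y j = fs!j \<cdot>\<^sub>v col Y j" if j: "j < k" for j
  proof -
    have "sh M (fs!j) (col Y j) = 0\<^sub>v k" using herm_eig[OF MC sa freal[OF j]] Ygen j by auto
    then show ?thesis using ycol[OF j] MC unfolding sh_def by (intro eq_vecI) (auto simp: vec_eq_iff)
  qed
  obtain es where cpT: "char_poly T = (\<Prod>e\<leftarrow>es. [:-e, 1:])" and les: "length es = 2*n"
    using char_poly_factorized[OF TC] by blast
  obtain V where V: "V \<in> carrier_mat (2*n) (2*n)"
    and Vker: "\<forall>x\<in>carrier_vec (2*n). V *\<^sub>v x = 0\<^sub>v (2*n) \<longrightarrow> x = 0\<^sub>v (2*n)"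
    and Vgen: "\<forall>j<2*n. col V j \<in> gen_eigenspace T (es!j)"
    using gen_basis[OF TC cpT] by blast
  have vcol: "col V j \<in> carrier_vec (2*n) \<and> col V j \<noteq> 0\<^sub>v (2*n)" if j: "j < 2*n" for j
  proof -
    have u: "unit_vec (2*n) j \<in> carrier_vec (2*n)" "unit_vec (2*n) j \<noteq> 0\<^sub>v (2*n)" using j
      by (auto simp: vec_eq_iff)
    have "V *\<^sub>v unit_vec (2*n) j \<noteq> 0\<^sub>v (2*n)" using Vker u by auto
    then show ?thesis using col_unit[OF V j] V j by auto
  qed
  have vmidE: "col V j \<in> vs.span Gmid"
    if j: "j < 2*n" and m: "exp (-h) \<le> cmod (es!j)" "cmod (es!j) \<le> exp h" for j
  proof -
    have "eigenvalue T (es!j)" using gen_eig_eigenvalue[OF TC] Vgen vcol[OF j] j by blast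
    then have "col V j \<in> Gmid" unfolding Gmid_def using Vgen j m by blast
    then show ?thesis using vs.in_own_span[OF GmidC] by auto
  qed
  have fnz: "fs!j \<noteq> 0" if j: "j < k" for j
  proof
    assume f0: "fs!j = 0"
    let ?y = "col Y j"
    have yc: "?y \<in> carrier_vec k" "?y \<noteq> 0\<^sub>v k" using ycol[OF j] by auto
    have My: "M *\<^sub>v ?y = 0\<^sub>v k" unfolding feig[OF j] f0 using yc Y by (intro eq_vecI) auto
    let ?w = "Phi *\<^sub>v ?y"
    have wE: "?w \<in> vs.span Gmid" using PhiE[OF yc(1)] .
    have wc: "?w \<in> carrier_vec (2*n)" using PhiC yc by auto
    have orthV: "jform n ?w (col V i) = 0" if i: "i < 2*n" for i
    proof (cases "exp (-h) \<le> cmod (es!i) \<and> cmod (es!i) \<le> exp h")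
      case True
      then obtain c where c: "c \<in> carrier_vec k" "col V i = Phi *\<^sub>v c" using vmidE[OF i] inE by blast
      show ?thesis unfolding c(2) jP[OF yc(1) c(1)] My by (simp add: ip_zero1)
    next
      case False
      then have "cmod (es!i) > exp h \<or> cmod (es!i) < exp (-h)" by auto
      then show ?thesis using crossE[OF wE, of "col V i" "es!i"] Vgen i by auto
    qed
    have "\<forall>v\<in>carrier_vec (2*n). jform n ?w v = 0"
    proof
      fix v :: "complex vec" assume v: "v \<in> carrier_vec (2*n)"
      obtain d where d: "d \<in> carrier_vec (2*n)" "V *\<^sub>v d = v" using surj_of_ker[OF V Vker v] by blast
      have "jform n ?w v = (\<Sum>l<2*n. cnj (d$l) * jform n ?w (col V l))"
        unfolding d(2)[symmetric] using jform_mat2[OF V d(1)] .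
      also have "\<dots> = 0" using orthV by simp
      finally show "jform n ?w v = 0" .
    qed
    then have w0: "?w = 0\<^sub>v (2*n)" using jform_nondeg[OF wc] by blast
    have "?y = (mat_adjoint Phi * Phi) *\<^sub>v ?y" using PP yc by simp
    also have "\<dots> = mat_adjoint Phi *\<^sub>v ?w" using adjoint_carrier[OF PhiC] PhiC yc by auto
    also have "\<dots> = 0\<^sub>v k" unfolding w0 using mat_vec_zero[OF adjoint_carrier[OF PhiC]] .
    finally show False using yc by simp
  qed
  have freal': "fs!j \<in> \<real>" if "j < k" for j using freal[OF that] by (simp add: Reals_cnj_iff)
  have fRe: "Re (fs!j) \<noteq> 0" if j: "j < k" for j
    using fnz[OF j] freal'[OF j] by (metis complex_is_Real_iff complex_eqI zero_complex.sel(1) zero_complex.sel(2))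
  define Ipos where "Ipos = filter (\<lambda>j. 0 < (1::real) * Re (fs!j)) [0..<k]"
  define Ineg where "Ineg = filter (\<lambda>j. 0 < (-1::real) * Re (fs!j)) [0..<k]"
  define Iout where "Iout = filter (\<lambda>j. cmod (es!j) > exp h) [0..<2*n]"
  define Iin where "Iin = filter (\<lambda>j. cmod (es!j) < exp (-h)) [0..<2*n]"
  define Imid where "Imid = filter (\<lambda>j. exp (-h) \<le> cmod (es!j) \<and> cmod (es!j) \<le> exp h) [0..<2*n]"
  have nup: "nu_pos M = length Ipos"
  proof -
    have "nu_pos M = length (filter (\<lambda>j. fs!j \<in> \<real> \<and> Re (fs!j) > 0) [0..<k])"
      unfolding nu_pos_count[OF cpM] filter_idx[of _ fs] lfs ..
    also have "\<dots> = length Ipos" unfolding Ipos_def using freal' by (auto intro!: arg_cong[where f=length] filter_cong)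
    finally show ?thesis .
  qed
  have nun: "nu_neg M = length Ineg"
  proof -
    have "nu_neg M = length (filter (\<lambda>j. fs!j \<in> \<real> \<and> Re (fs!j) < 0) [0..<k])"
      unfolding nu_neg_count[OF cpM] filter_idx[of _ fs] lfs ..
    also have "\<dots> = length Ineg" unfolding Ineg_def using freal' by (auto intro!: arg_cong[where f=length] filter_cong)
    finally show ?thesis .
  qed
  have pq: "length Ipos + length Ineg = k"
  proof -
    have "\<forall>x\<in>set [0..<k]. (0 < (1::real) * Re (fs!x) \<and> \<not> 0 < (-1::real) * Re (fs!x)) \<or>
       (\<not> 0 < (1::real) * Re (fs!x) \<and> 0 < (-1::real) * Re (fs!x))"
    proof
      fix x assume "x \<in> set [0..<k]"
      then have "Re (fs!x) \<noteq> 0" using fRe by auto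
      then show "(0 < (1::real) * Re (fs!x) \<and> \<not> 0 < (-1::real) * Re (fs!x)) \<or>
       (\<not> 0 < (1::real) * Re (fs!x) \<and> 0 < (-1::real) * Re (fs!x))" by auto
    qed
    from filter2[OF this] show ?thesis unfolding Ipos_def Ineg_def by simp
  qed
  have abc: "length Iout + length Iin + length Imid = 2*n"
  proof -
    have ee: "exp (-h) < exp h" using hpos by simp
    have "\<forall>x\<in>set [0..<2*n]. (cmod (es!x) > exp h \<and> \<not> cmod (es!x) < exp (-h) \<and> \<not> (exp (-h) \<le> cmod (es!x) \<and> cmod (es!x) \<le> exp h))
      \<or> (\<not> cmod (es!x) > exp h \<and> cmod (es!x) < exp (-h) \<and> \<not> (exp (-h) \<le> cmod (es!x) \<and> cmod (es!x) \<le> exp h))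
      \<or> (\<not> cmod (es!x) > exp h \<and> \<not> cmod (es!x) < exp (-h) \<and> (exp (-h) \<le> cmod (es!x) \<and> cmod (es!x) \<le> exp h))"
      using ee by (metis leI less_le_trans not_less_iff_gr_or_eq)
    from filter3[OF this] show ?thesis unfolding Iout_def Iin_def Imid_def by simp
  qed
  have idxp: "\<And>P m. distinct (filter P [0..<m]) \<and> set (filter P [0..<m]) \<subseteq> {..<m}" by auto
  have crossW: "jform n e (W *\<^sub>v d) = 0 \<and> jform n (W *\<^sub>v d) e = 0"
    if W: "W = V * selmat (2*n) I" and I: "I = Iout \<or> I = Iin" and e: "e \<in> vs.span Gmid"
      and d: "d \<in> carrier_vec (length I)" for W I e d
  proof -
    have Il: "distinct I" "set I \<subseteq> {..<2*n}" using I unfolding Iout_def Iin_def by auto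
    have Il3: "I!j < 2*n \<and> (cmod (es!(I!j)) > exp h \<or> cmod (es!(I!j)) < exp (-h))" if j: "j < length I" for j
    proof (cases "I = Iout")
      case True
      have "Iout!j < 2*n \<and> cmod (es!(Iout!j)) > exp h" using j True unfolding Iout_def by (intro filt_props(3)) auto
      then show ?thesis using True by auto
    next
      case False
      then have II: "I = Iin" using I by auto
      have "Iin!j < 2*n \<and> cmod (es!(Iin!j)) < exp (-h)" using j II unfolding Iin_def by (intro filt_props(3)) auto
      then show ?thesis using II by auto
    qed
    have WC: "W \<in> carrier_mat (2*n) (length I)" using W V selmat_carrier by auto
    have cW: "\<And>j. j < length I \<Longrightarrow> jform n e (col W j) = 0 \<and> jform n (col W j) e = 0"
    proof -
      fix j assume j: "j < length I"
      have "col W j = col V (I!j)" unfolding W using col_sel[OF V Il(2) j] .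
      then show "jform n e (col W j) = 0 \<and> jform n (col W j) e = 0"
        using crossE[OF e, of "col V (I!j)" "es!(I!j)"] Vgen Il3[OF j] by auto
    qed
    have "jform n e (W *\<^sub>v d) = 0" using jform_mat2[OF WC d] cW by simp
    moreover have "jform n (W *\<^sub>v d) e = 0" using jform_mat1[OF WC d] cW by simp
    ultimately show ?thesis by simp
  qed
  have neutW: "\<forall>d \<in> carrier_vec (length I). \<forall>d' \<in> carrier_vec (length I). jform n (W *\<^sub>v d) (W *\<^sub>v d') = 0"
    if W: "W = V * selmat (2*n) I" and I: "I = Iout \<or> I = Iin" for W I
  proof -
    have WC: "W \<in> carrier_mat (2*n) (length I)" using W V selmat_carrier by auto
    have Il2: "set I \<subseteq> {..<2*n}" using I unfolding Iout_def Iin_def by auto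
    show ?thesis
    proof (rule family_neutral[OF WC])
      fix j l assume jl: "j < length I" "l < length I"
      have cj: "col W j = col V (I!j)" "col W l = col V (I!l)" unfolding W using col_sel[OF V Il2] jl by auto
      have a: "I!j < 2*n" "I!l < 2*n" using Il2 jl nth_mem by blast+
      have "cmod (es!(I!j)) * cmod (es!(I!l)) \<noteq> 1"
      proof (cases "I = Iout")
        case True
        then have "cmod (es!(I!j)) > exp h" "cmod (es!(I!l)) > exp h"
          using jl unfolding Iout_def by (auto dest: filt_props(3))
        then show ?thesis using mod_out_out[OF hpos] by auto
      next
        case False
        then have "I = Iin" using I by auto
        then have "cmod (es!(I!j)) < exp (-h)" "cmod (es!(I!l)) < exp (-h)"
          using jl unfolding Iin_def by (auto dest: filt_props(3))
        then show ?thesis using mod_in_in[OF hpos] by auto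
      qed
      then show "jform n (col W j) (col W l) = 0" unfolding cj
        using J_orth_gen[OF JT cnj_ne_one] Vgen a by blast
    qed
  qed
  have kerW: "\<forall>d \<in> carrier_vec (length I). (V * selmat (2*n) I) *\<^sub>v d = 0\<^sub>v (2*n) \<longrightarrow> d = 0\<^sub>v (length I)"
    if I: "I = Iout \<or> I = Iin" for I
  proof -
    have "distinct I" "set I \<subseteq> {..<2*n}" using I unfolding Iout_def Iin_def by auto
    then show ?thesis using sel_ker[OF V Vker] by blast
  qed
  have bound: "length I + length I' \<le> n"
    if I: "I = Ipos \<and> sg = (1::real) \<or> I = Ineg \<and> sg = -1" and I': "I' = Iout \<or> I' = Iin" for I I' sg
  proof -
    let ?Z = "Phi * (Y * selmat k I)" and ?W = "V * selmat (2*n) I'"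
    have sg: "sg = 1 \<or> sg = -1" using I by auto
    have Id: "I = filter (\<lambda>j. 0 < sg * Re (fs!j)) [0..<k]" using I unfolding Ipos_def Ineg_def by auto
    have ZC: "?Z \<in> carrier_mat (2*n) (length I)" using PhiC Y selmat_carrier by auto
    have WC: "?W \<in> carrier_mat (2*n) (length I')" using V selmat_carrier by auto
    have Zdef: "\<forall>c \<in> carrier_vec (length I). c \<noteq> 0\<^sub>v (length I) \<longrightarrow> 0 < sg * Re (jform n (?Z *\<^sub>v c) (?Z *\<^sub>v c))"
      using Z_definite[OF PhiC M_def sa Y Yker Ygen freal feig sg Id] by blast
    have cross: "\<forall>c \<in> carrier_vec (length I). \<forall>d \<in> carrier_vec (length I'). jform n (?Z *\<^sub>v c) (?W *\<^sub>v d) = 0 \<and> jform n (?W *\<^sub>v d) (?Z *\<^sub>v c) = 0"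
    proof (intro ballI)
      fix c d :: "complex vec" assume c: "c \<in> carrier_vec (length I)" and d: "d \<in> carrier_vec (length I')"
      have YS: "Y * selmat k I \<in> carrier_mat k (length I)" using Y selmat_carrier by auto
      have "?Z *\<^sub>v c = Phi *\<^sub>v ((Y * selmat k I) *\<^sub>v c)"
        using assoc_mult_mat_vec[OF PhiC YS c] .
      moreover have "(Y * selmat k I) *\<^sub>v c \<in> carrier_vec k" using YS c by auto
      ultimately have "?Z *\<^sub>v c \<in> vs.span Gmid" using PhiE by auto
      then show "jform n (?Z *\<^sub>v c) (?W *\<^sub>v d) = 0 \<and> jform n (?W *\<^sub>v d) (?Z *\<^sub>v c) = 0"
        using crossW[OF refl I' _ d] by blast
    qed
    show ?thesis using pair_bound[OF ZC WC kerW[OF I'] sg Zdef neutW[OF refl I'] cross] .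
  qed
  have b1: "length Ipos + length Iout \<le> n" using bound by blast
  have b2: "length Ipos + length Iin \<le> n" using bound by blast
  have b3: "length Ineg + length Iout \<le> n" using bound by blast
  have b4: "length Ineg + length Iin \<le> n" using bound by blast
  have gk: "length Imid \<le> k"
  proof -
    let ?W = "V * selmat (2*n) Imid"
    let ?g = "length Imid"
    have WC: "?W \<in> carrier_mat (2*n) ?g" using V selmat_carrier by auto
    have Il: "distinct Imid" "set Imid \<subseteq> {..<2*n}" unfolding Imid_def by auto
    have Wker: "\<forall>d \<in> carrier_vec ?g. ?W *\<^sub>v d = 0\<^sub>v (2*n) \<longrightarrow> d = 0\<^sub>v ?g"
      using sel_ker[OF V Vker Il] .
    have ex: "\<exists>c. c \<in> carrier_vec k \<and> col ?W j = Phi *\<^sub>v c" if j: "j < ?g" for j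
    proof -
      have a: "Imid!j < 2*n" "exp (-h) \<le> cmod (es!(Imid!j))" "cmod (es!(Imid!j)) \<le> exp h"
        using j unfolding Imid_def by (auto dest: filt_props(3))
      have "col ?W j = col V (Imid!j)" using col_sel[OF V Il(2) j] .
      then show ?thesis using vmidE[OF a] inE by metis
    qed
    define C where "C = mat k ?g (\<lambda>(i,j). (SOME c. c \<in> carrier_vec k \<and> col ?W j = Phi *\<^sub>v c) $ i)"
    have CC: "C \<in> carrier_mat k ?g" unfolding C_def by auto
    have colC: "col C j = (SOME c. c \<in> carrier_vec k \<and> col ?W j = Phi *\<^sub>v c)" if j: "j < ?g" for j
    proof -
      have "(SOME c. c \<in> carrier_vec k \<and> col ?W j = Phi *\<^sub>v c) \<in> carrier_vec k"
        using someI_ex[OF ex[OF j]] by blast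
      then show ?thesis unfolding C_def using j by (intro eq_vecI) auto
    qed
    have PC: "Phi * C = ?W"
    proof (rule mat_col_eqI)
      fix j assume "j < dim_col ?W"
      then have j: "j < ?g" using WC by auto
      have "col (Phi * C) j = Phi *\<^sub>v col C j" using col_mult2[OF PhiC CC j] .
      also have "\<dots> = col ?W j" unfolding colC[OF j] using someI_ex[OF ex[OF j]] by auto
      finally show "col (Phi * C) j = col ?W j" .
    qed (use PhiC CC WC in auto)
    have Cker: "\<forall>d \<in> carrier_vec ?g. C *\<^sub>v d = 0\<^sub>v k \<longrightarrow> d = 0\<^sub>v ?g"
    proof (intro ballI impI)
      fix d :: "complex vec" assume d: "d \<in> carrier_vec ?g" and z: "C *\<^sub>v d = 0\<^sub>v k"
      have "?W *\<^sub>v d = Phi *\<^sub>v (C *\<^sub>v d)" unfolding PC[symmetric] using PhiC CC d by auto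
      also have "\<dots> = 0\<^sub>v (2*n)" unfolding z using mat_vec_zero[OF PhiC] .
      finally show "d = 0\<^sub>v ?g" using Wker d by auto
    qed
    show ?thesis using TK[OF CC Cker] .
  qed
  have "length Ipos = length Ineg" using b1 b2 b3 b4 gk abc pq by linarith
  then show ?thesis unfolding Sig_with_def M_def[symmetric] nup nun by simp
qed

theorem proposition5p6:
  fixes n :: nat and T :: "complex mat"
  assumes "J_unitary n T"
  shows "ess_S1_gapped T \<and>
    (\<forall>h Phi k. admissible_width T h \<longrightarrow> isometry_onto Phi (2*n) k (E_eq T h) \<longrightarrow>
        Sig_with n Phi = 0)"
proof -
  have TC: "T \<in> carrier_mat (2*n) (2*n)" using assms unfolding J_unitary_def by auto
  show ?thesis using ess_gapped[OF TC] sig_zero[OF assms] by blast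
qed

end
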